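(* Let $\gamma>0$ and let $(\Lambda,P)$ be a stochastic energy exchange model such that $\nu^\gamma_{\mathcal{E},N}$ is reversible for its generator for all $\mathcal{E}>0$, $N\ge2$. Assume there are $\tilde C>0$ and $m\ge0$ with $\lambda(\mathcal{E},2)\ge\tilde C\mathcal{E}^m$ for all $\mathcal{E}>0$. Then for all $\mathcal{E}>0$ and $N\ge2$, $$\lambda(\mathcal{E},N)\ \ge\ \frac{\tilde C}{2^m}\,\lambda^{*,m}(\mathcal{E},N).$$
   Context: Fix $\gamma>0$. $\nu^{\gamma}(dx)=x^{\gamma-1}e^{-x}\Gamma(\gamma)^{-1}dx$ on $(0,\infty)$; $\mathcal{S}_{\mathcal{E},N}=\{x\in(0,\infty)^N:\frac1N\sum_i x_i=\mathcal{E}\}$; $\nu_{\mathcal{E},N}=\nu^\gamma_{\mathcal{E},N}$ is the conditional law of $(\nu^\gamma)^{\otimes N}$ on $\mathcal{S}_{\mathcal{E},N}$, with expectation $E_{\nu_{\mathcal{E},N}}$. $\mu^\gamma$ is the Beta$(\gamma,\gamma)$ law on $[0,1]$. For $i\ne j$, $\alpha\in[0,1]$, $T_{i,j,\alpha}x$ replaces $x_i$ by $\alpha(x_i+x_j)$ and $x_j$ by $(1-\alpha)(x_i+x_j)$. Define $E_{i,j}f(x)=\int\mu^\gamma(d\alpha)f(T_{i,j,\alpha}x)$ (this is the conditional expectation of $f$ under $\nu_{\mathcal{E},N}$ given $\{x_k\}_{k\ne i,j}$) and $D_{i,j}f=E_{i,j}f-f$. For real $m$, $\mathcal{D}^{*,m}_{\mathcal{E},N}(f)=\sum_{i=1}^{N-1}E_{\nu_{\mathcal{E},N}}[(x_i+x_{i+1})^m(D_{i,i+1}f)^2]$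 and $\lambda^{*,m}(\mathcal{E},N)=\inf\{\mathcal{D}^{*,m}_{\mathcal{E},N}(f)/E_{\nu_{\mathcal{E},N}}[f^2]: f\in L^2(\nu_{\mathcal{E},N}), E_{\nu_{\mathcal{E},N}}[f]=0,f\ne0\}$. A model $(\Lambda,P)$: continuous $\Lambda:(0,\infty)^2\to[0,\infty)$, continuous probability kernel $P(a,b,d\alpha)$ on $[0,1]$; generator $\mathcal{L}f(x)=\sum_{i=1}^{N-1}\Lambda(x_i,x_{i+1})\int P(x_i,x_{i+1},d\alpha)[f(T_{i,i+1,\alpha}x)-f(x)]$; Dirichlet form $\mathcal{D}_{\mathcal{E},N}(f)=\frac12\sum_{i=1}^{N-1}\int\nu_{\mathcal{E},N}(dx)\Lambda(x_i,x_{i+1})\int P(x_i,x_{i+1},d\alpha)[f(T_{i,i+1,\alpha}x)-f(x)]^2$; spectral gap $\lambda(\mathcal{E},N)$ is the infimum of $\mathcal{D}_{\mathcal{E},N}(f)/E_{\nu_{\mathcal{E},N}}[f^2]$ over nonzero mean-zero $f\in L^2(\nu_{\mathcal{E},N})$. *)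

theory Defs
  imports "HOL-Probability.Probability"
begin

text \<open>Coordinates are 0-based: a point of (0,inf)^N is a function x with x 0, ..., x (N-1).
  Nearest-neighbour bonds are (i, i+1) for i < N - 1.\<close>

definition gamma_dens :: "real \<Rightarrow> real \<Rightarrow> real" where
  "gamma_dens g t = (if t > 0 then t powr (g - 1) * exp (- t) / Gamma g else 0)"

text \<open>Parametrisation of the hyperplane {sum x_i = N E} by its first N-1 coordinates.\<close>
definition embed_pt :: "nat \<Rightarrow> real \<Rightarrow> (nat \<Rightarrow> real) \<Rightarrow> (nat \<Rightarrow> real)" where
  "embed_pt N E y = (\<lambda>i. if i < N - 1 then y i
                          else if i = N - 1 then real N * E - (\<Sum>j<N - 1. y j)
                          else undefined)"

definition cond_dens :: "real \<Rightarrow> nat \<Rightarrow> real \<Rightarrow> (nat \<Rightarrow> real) \<Rightarrow> real" where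
  "cond_dens g N E y = (\<Prod>i<N. gamma_dens g (embed_pt N E y i))"

text \<open>nu_{E,N}: conditional law of (nu^gamma)^N on S_{E,N} (normalised restriction of the
  product density to the hyperplane), as a measure on PiM {..<N} lborel.\<close>
definition nuEN :: "real \<Rightarrow> real \<Rightarrow> nat \<Rightarrow> (nat \<Rightarrow> real) measure" where
  "nuEN g E N = distr
     (density (PiM {..<N - 1} (\<lambda>_. lborel))
        (\<lambda>y. ennreal (cond_dens g N E y) /
              (\<integral>\<^sup>+ z. ennreal (cond_dens g N E z) \<partial>PiM {..<N - 1} (\<lambda>_. lborel))))
     (PiM {..<N} (\<lambda>_. lborel)) (embed_pt N E)"

definition beta_meas :: "real \<Rightarrow> real measure" where
  "beta_meas g = density lborel
     (\<lambda>a. ennreal (if 0 < a \<and> a < 1 then a powr (g - 1) * (1 - a) powr (g - 1) / Beta g g else 0))"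

definition Tmap :: "nat \<Rightarrow> nat \<Rightarrow> real \<Rightarrow> (nat \<Rightarrow> real) \<Rightarrow> (nat \<Rightarrow> real)" where
  "Tmap i j a x = x(i := a * (x i + x j), j := (1 - a) * (x i + x j))"

definition Eij :: "real \<Rightarrow> nat \<Rightarrow> nat \<Rightarrow> ((nat \<Rightarrow> real) \<Rightarrow> real) \<Rightarrow> (nat \<Rightarrow> real) \<Rightarrow> real" where
  "Eij g i j f x = (\<integral>a. f (Tmap i j a x) \<partial>beta_meas g)"

definition Dij :: "real \<Rightarrow> nat \<Rightarrow> nat \<Rightarrow> ((nat \<Rightarrow> real) \<Rightarrow> real) \<Rightarrow> (nat \<Rightarrow> real) \<Rightarrow> real" where
  "Dij g i j f x = Eij g i j f x - f x"

definition L2_meanzero :: "'a measure \<Rightarrow> ('a \<Rightarrow> real) \<Rightarrow> bool" where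
  "L2_meanzero M f \<longleftrightarrow> f \<in> borel_measurable M \<and> integrable M (\<lambda>x. (f x)\<^sup>2)
      \<and> (\<integral>x. f x \<partial>M) = 0 \<and> (\<integral>x. (f x)\<^sup>2 \<partial>M) \<noteq> 0"

definition Dstar :: "real \<Rightarrow> real \<Rightarrow> real \<Rightarrow> nat \<Rightarrow> ((nat \<Rightarrow> real) \<Rightarrow> real) \<Rightarrow> ennreal" where
  "Dstar g m E N f = (\<Sum>i<N - 1. \<integral>\<^sup>+ x. ennreal ((x i + x (Suc i)) powr m * (Dij g i (Suc i) f x)\<^sup>2) \<partial>nuEN g E N)"

definition lambda_star :: "real \<Rightarrow> real \<Rightarrow> real \<Rightarrow> nat \<Rightarrow> ennreal" where
  "lambda_star g m E N = (INF f \<in> {f. L2_meanzero (nuEN g E N) f}.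
      Dstar g m E N f / ennreal (\<integral>x. (f x)\<^sup>2 \<partial>nuEN g E N))"

definition exchange_model :: "(real \<Rightarrow> real \<Rightarrow> real) \<Rightarrow> (real \<Rightarrow> real \<Rightarrow> real measure) \<Rightarrow> bool" where
  "exchange_model Lam P \<longleftrightarrow>
     continuous_on {p. 0 < fst p \<and> 0 < snd p} (\<lambda>p. Lam (fst p) (snd p))
   \<and> (\<forall>a b. 0 < a \<longrightarrow> 0 < b \<longrightarrow> 0 \<le> Lam a b)
   \<and> (\<forall>a b. 0 < a \<longrightarrow> 0 < b \<longrightarrow>
        prob_space (P a b) \<and> sets (P a b) = sets borel \<and> emeasure (P a b) {0..1} = 1)
   \<and> (\<forall>h::real \<Rightarrow> real. continuous_on {0..1} h \<longrightarrow>
        continuous_on {p. 0 < fst p \<and> 0 < snd p} (\<lambda>p. \<integral>a. h a \<partial>P (fst p) (snd p)))"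

definition generator :: "(real \<Rightarrow> real \<Rightarrow> real) \<Rightarrow> (real \<Rightarrow> real \<Rightarrow> real measure) \<Rightarrow> nat
    \<Rightarrow> ((nat \<Rightarrow> real) \<Rightarrow> real) \<Rightarrow> (nat \<Rightarrow> real) \<Rightarrow> real" where
  "generator Lam P N f x = (\<Sum>i<N - 1. Lam (x i) (x (Suc i)) *
      (\<integral>a. f (Tmap i (Suc i) a x) - f x \<partial>P (x i) (x (Suc i))))"

text \<open>nu_{E,N} is reversible for the generator, for all E > 0 and N >= 2
  (symmetry of the generator on bounded measurable test functions).\<close>
definition reversible_model :: "real \<Rightarrow> (real \<Rightarrow> real \<Rightarrow> real) \<Rightarrow> (real \<Rightarrow> real \<Rightarrow> real measure) \<Rightarrow> bool" where
  "reversible_model g Lam P \<longleftrightarrow> (\<forall>E>0. \<forall>N\<ge>2. \<forall>f h.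
      f \<in> borel_measurable (PiM {..<N} (\<lambda>_. lborel)) \<and> h \<in> borel_measurable (PiM {..<N} (\<lambda>_. lborel))
      \<and> bounded (range f) \<and> bounded (range h)
      \<and> integrable (nuEN g E N) (\<lambda>x. h x * generator Lam P N f x)
      \<and> integrable (nuEN g E N) (\<lambda>x. f x * generator Lam P N h x)
      \<longrightarrow> (\<integral>x. h x * generator Lam P N f x \<partial>nuEN g E N) = (\<integral>x. f x * generator Lam P N h x \<partial>nuEN g E N))"

definition dirichlet_form :: "real \<Rightarrow> (real \<Rightarrow> real \<Rightarrow> real) \<Rightarrow> (real \<Rightarrow> real \<Rightarrow> real measure)
    \<Rightarrow> real \<Rightarrow> nat \<Rightarrow> ((nat \<Rightarrow> real) \<Rightarrow> real) \<Rightarrow> ennreal" where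
  "dirichlet_form g Lam P E N f = (\<Sum>i<N - 1. \<integral>\<^sup>+ x. ennreal (Lam (x i) (x (Suc i))) *
      (\<integral>\<^sup>+ a. ennreal ((f (Tmap i (Suc i) a x) - f x)\<^sup>2) \<partial>P (x i) (x (Suc i))) \<partial>nuEN g E N) / 2"

definition spectral_gap :: "real \<Rightarrow> (real \<Rightarrow> real \<Rightarrow> real) \<Rightarrow> (real \<Rightarrow> real \<Rightarrow> real measure)
    \<Rightarrow> real \<Rightarrow> nat \<Rightarrow> ennreal" where
  "spectral_gap g Lam P E N = (INF f \<in> {f. L2_meanzero (nuEN g E N) f}.
      dirichlet_form g Lam P E N f / ennreal (\<integral>x. (f x)\<^sup>2 \<partial>nuEN g E N))"

end

theory Submission
  imports Defs
begin



definition wbeta :: "real \<Rightarrow> real \<Rightarrow> real" where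
  "wbeta g a = (if 0 < a \<and> a < 1 then a powr (g - 1) * (1 - a) powr (g - 1) else 0)"

lemma wbeta_nonneg: "0 \<le> wbeta g a"
  by (simp add: wbeta_def)

lemma wbeta_meas[measurable]: "wbeta g \<in> borel_measurable borel"
  unfolding wbeta_def by measurable

lemma gamma_dens_nonneg: "0 < g \<Longrightarrow> 0 \<le> gamma_dens g t"
  by (simp add: gamma_dens_def)

lemma gamma_dens_meas[measurable]: "gamma_dens g \<in> borel_measurable borel"
  unfolding gamma_dens_def by measurable

lemma Beta_pos: "0 < (g::real) \<Longrightarrow> 0 < Beta g g"
  by (simp add: Beta_def Gamma_real_pos)

lemma nn_integral_wbeta:
  assumes "0 < g"
  shows "(\<integral>\<^sup>+ a. ennreal (wbeta g a) \<partial>lborel) = ennreal (Beta g g)"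
proof -
  have hi: "((\<lambda>t. t powr (g - 1) * (1 - t) powr (g - 1)) has_integral Beta g g) {0<..<1}"
    using has_integral_Beta_real[of g g] assms by (simp add: has_integral_Icc_iff_Ioo)
  have "(\<integral>\<^sup>+ a. ennreal (a powr (g - 1) * (1 - a) powr (g - 1)) * indicator {0<..<1} a \<partial>lborel) = ennreal (Beta g g)"
    by (rule nn_integral_has_integral_lebesgue'[OF _ hi]) simp
  moreover have "(\<integral>\<^sup>+ a. ennreal (wbeta g a) \<partial>lborel) =
     (\<integral>\<^sup>+ a. ennreal (a powr (g - 1) * (1 - a) powr (g - 1)) * indicator {0<..<1} a \<partial>lborel)"
    by (intro nn_integral_cong) (auto simp: wbeta_def indicator_def)
  ultimately show ?thesis by simp
qed

lemma beta_meas_alt: "beta_meas g = density lborel (\<lambda>a. ennreal (wbeta g a / Beta g g))"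
  unfolding beta_meas_def wbeta_def by (intro arg_cong2[where f=density] refl ext) auto

lemma nn_integral_beta:
  assumes "0 < g" and [measurable]: "G \<in> borel_measurable borel"
  shows "(\<integral>\<^sup>+ a. G a \<partial>beta_meas g) = ennreal (1 / Beta g g) * (\<integral>\<^sup>+ a. ennreal (wbeta g a) * G a \<partial>lborel)"
proof -
  have "(\<integral>\<^sup>+ a. G a \<partial>beta_meas g) = (\<integral>\<^sup>+ a. ennreal (wbeta g a / Beta g g) * G a \<partial>lborel)"
    unfolding beta_meas_alt by (subst nn_integral_density) auto
  also have "\<dots> = (\<integral>\<^sup>+ a. ennreal (1 / Beta g g) * (ennreal (wbeta g a) * G a) \<partial>lborel)"
    using Beta_pos[OF assms(1)]
    by (intro nn_integral_cong) (simp add: divide_inverse ennreal_mult wbeta_nonneg ac_simps)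
  also have "\<dots> = ennreal (1 / Beta g g) * (\<integral>\<^sup>+ a. ennreal (wbeta g a) * G a \<partial>lborel)"
    by (rule nn_integral_cmult) auto
  finally show ?thesis .
qed

lemma prob_space_beta: assumes "0 < g" shows "prob_space (beta_meas g)"
proof
  have "emeasure (beta_meas g) (space (beta_meas g)) = (\<integral>\<^sup>+ a. 1 \<partial>beta_meas g)"
    by simp
  also have "\<dots> = ennreal (1 / Beta g g) * ennreal (Beta g g)"
    using nn_integral_beta[OF assms, of "\<lambda>_. 1"] nn_integral_wbeta[OF assms] by simp
  also have "\<dots> = 1" using Beta_pos[OF assms] by (simp add: ennreal_mult'[symmetric])
  finally show "emeasure (beta_meas g) (space (beta_meas g)) = 1" .
qed

lemma sets_beta[simp, measurable_cong]: "sets (beta_meas g) = sets borel"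
  by (simp add: beta_meas_def)

lemma space_beta[simp]: "space (beta_meas g) = UNIV"
  by (simp add: beta_meas_def)

lemma AE_beta: "AE a in beta_meas g. 0 < a \<and> a < 1"
  unfolding beta_meas_def
  by (subst AE_density) (auto intro!: AE_I2)

definition Kc :: "real \<Rightarrow> real \<Rightarrow> real" where
  "Kc g R = R powr (2 * g - 2) * exp (- R) / (Gamma g * Gamma g)"

lemma gg_scale:
  assumes "0 < R"
  shows "gamma_dens g (R * a) * gamma_dens g (R - R * a) = Kc g R * wbeta g a"
proof (cases "0 < a \<and> a < 1")
  case True
  have "R * a > 0" "R - R * a > 0" using True assms by (auto simp: algebra_simps)
  moreover have "(R * a) powr (g - 1) = R powr (g - 1) * a powr (g - 1)"
    using True assms by (simp add: powr_mult)
  moreover have "(R - R * a) powr (g - 1) = R powr (g - 1) * (1 - a) powr (g - 1)"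
    using True assms powr_mult[of R "1 - a" "g - 1"] by (simp add: algebra_simps)
  moreover have "R powr (g - 1) * R powr (g - 1) = R powr (2 * g - 2)"
    by (simp add: powr_add[symmetric])
  moreover have "exp (- (R * a)) * exp (- (R - R * a)) = exp (- R)"
    by (simp add: exp_add[symmetric])
  ultimately show ?thesis using True
    apply (simp add: gamma_dens_def wbeta_def Kc_def)
    apply (simp add: field_simps)
    by (metis (no_types, lifting) mult.assoc mult.commute)
next
  case False
  then have "a \<le> 0 \<or> 1 \<le> a" by auto
  then have "R * a \<le> 0 \<or> R - R * a \<le> 0"
  proof
    assume "a \<le> 0" then show ?thesis using assms by (simp add: mult_nonneg_nonpos less_imp_le)
  next
    assume "1 \<le> a" then have "R * 1 \<le> R * a" using assms by (intro mult_left_mono) auto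
    then show ?thesis by simp
  qed
  then have "gamma_dens g (R * a) * gamma_dens g (R - R * a) = 0"
    by (auto simp: gamma_dens_def)
  moreover have "wbeta g a = 0" using False by (simp add: wbeta_def)
  ultimately show ?thesis by simp
qed

lemma Kc_pos: "0 < g \<Longrightarrow> 0 < R \<Longrightarrow> 0 < Kc g R"
  by (simp add: Kc_def Gamma_real_pos mult_pos_pos) 

lemma L0:
  assumes "0 < R" "0 < g" and [measurable]: "G \<in> borel_measurable borel"
  shows "(\<integral>\<^sup>+ u. ennreal (gamma_dens g u * gamma_dens g (R - u)) * G u \<partial>lborel)
       = ennreal (R * Kc g R) * (\<integral>\<^sup>+ a. ennreal (wbeta g a) * G (R * a) \<partial>lborel)"
proof -
  have "(\<integral>\<^sup>+ u. ennreal (gamma_dens g u * gamma_dens g (R - u)) * G u \<partial>lborel)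
     = ennreal \<bar>R\<bar> * (\<integral>\<^sup>+ a. ennreal (gamma_dens g (0 + R * a) * gamma_dens g (R - (0 + R * a))) * G (0 + R * a) \<partial>lborel)"
    by (rule nn_integral_real_affine) (use assms in auto)
  also have "\<dots> = ennreal R * (\<integral>\<^sup>+ a. ennreal (Kc g R) * (ennreal (wbeta g a) * G (R * a)) \<partial>lborel)"
    using assms by (simp add: gg_scale ennreal_mult' Kc_pos[OF assms(2,1)] wbeta_nonneg less_imp_le mult.assoc)
  also have "\<dots> = ennreal R * (ennreal (Kc g R) * (\<integral>\<^sup>+ a. ennreal (wbeta g a) * G (R * a) \<partial>lborel))"
    by (subst nn_integral_cmult) auto
  also have "\<dots> = ennreal (R * Kc g R) * (\<integral>\<^sup>+ a. ennreal (wbeta g a) * G (R * a) \<partial>lborel)"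
    using assms Kc_pos[OF assms(2,1)] by (simp add: ennreal_mult mult.assoc)
  finally show ?thesis .
qed

lemma Z2_val:
  assumes "0 < g" "0 < R"
  shows "(\<integral>\<^sup>+ u. ennreal (gamma_dens g u * gamma_dens g (R - u)) \<partial>lborel) = ennreal (R * Kc g R * Beta g g)"
  using L0[OF assms(2) assms(1), of "\<lambda>_. 1"] nn_integral_wbeta[OF assms(1)] assms Kc_pos[OF assms(1,2)] Beta_pos[OF assms(1)]
  by (simp add: ennreal_mult)

lemma gg_zero: "R \<le> 0 \<Longrightarrow> gamma_dens g u * gamma_dens g (R - u) = 0"
  by (auto simp: gamma_dens_def)

lemma L1:
  assumes "0 < g" and [measurable]: "G \<in> borel_measurable borel"
  shows "(\<integral>\<^sup>+ u. ennreal (gamma_dens g u * gamma_dens g (R - u)) * G u \<partial>lborel)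
       = (\<integral>\<^sup>+ u. ennreal (gamma_dens g u * gamma_dens g (R - u)) \<partial>lborel) * (\<integral>\<^sup>+ a. G (a * R) \<partial>beta_meas g)"
proof (cases "0 < R")
  case False
  then show ?thesis by (simp add: gg_zero)
next
  case True
  have "(\<integral>\<^sup>+ a. G (a * R) \<partial>beta_meas g) = ennreal (1 / Beta g g) * (\<integral>\<^sup>+ a. ennreal (wbeta g a) * G (R * a) \<partial>lborel)"
    using nn_integral_beta[OF assms(1), of "\<lambda>a. G (a * R)"] by (simp add: mult.commute)
  then show ?thesis
    using L0[OF True assms(1) assms(2)] Z2_val[OF assms(1) True] Beta_pos[OF assms(1)] Kc_pos[OF assms(1) True] True
    apply simp
    apply (simp add: mult.assoc[symmetric] ennreal_mult[symmetric])
    done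
qed




interpretation PL: product_sigma_finite "\<lambda>_::nat. lborel :: real measure"
  by standard

lemma meas_into_PiM:
  assumes "\<And>j. j \<in> I \<Longrightarrow> (\<lambda>w. h w j) \<in> borel_measurable M"
    and "\<And>w j. w \<in> space M \<Longrightarrow> j \<notin> I \<Longrightarrow> h w j = undefined"
  shows "h \<in> measurable M (PiM I (\<lambda>_. lborel :: real measure))"
proof -
  have "(\<lambda>w j. h w j) \<in> measurable M (PiM I (\<lambda>_. lborel :: real measure))"
    by (rule measurable_PiM_single') (use assms in \<open>auto simp: PiE_def extensional_def\<close>)
  then show ?thesis by simp
qed

lemma space_PiM_lborel: "x \<in> space (PiM I (\<lambda>_. lborel :: real measure)) \<longleftrightarrow> (\<forall>j. j \<notin> I \<longrightarrow> x j = undefined)"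
  by (auto simp: space_PiM PiE_def extensional_def)

lemma embed_meas[measurable]:
  assumes "0 < N" shows "embed_pt N E \<in> measurable (PiM {..<N - 1} (\<lambda>_. lborel)) (PiM {..<N} (\<lambda>_. lborel))"
proof (rule meas_into_PiM)
  fix j assume "j \<in> {..<N}"
  have c: "(\<lambda>w::nat\<Rightarrow>real. w k) \<in> borel_measurable (Pi\<^sub>M {..<N - 1} (\<lambda>_. lborel))" if "k < N - 1" for k
    using that measurable_component_singleton[of k "{..<N - 1}" "\<lambda>_. lborel"] by simp
  show "(\<lambda>w. embed_pt N E w j) \<in> borel_measurable (Pi\<^sub>M {..<N - 1} (\<lambda>_. lborel))"
  proof (cases "j < N - 1")
    case True
    then show ?thesis using c[OF True] by (simp add: embed_pt_def)
  next
    case False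
    then have "j = N - 1" using \<open>j \<in> {..<N}\<close> by auto
    then have "(\<lambda>w. embed_pt N E w j) = (\<lambda>w. real N * E - (\<Sum>k<N - 1. w k))"
      using False \<open>j \<in> {..<N}\<close> by (intro ext) (auto simp add: embed_pt_def)
    moreover have "(\<lambda>w. real N * E - (\<Sum>k<N - 1. w k)) \<in> borel_measurable (Pi\<^sub>M {..<N - 1} (\<lambda>_. lborel))"
      using c by (intro borel_measurable_diff borel_measurable_sum) auto
    ultimately show ?thesis by simp
  qed
next
  fix w j assume "j \<notin> {..<N}" then show "embed_pt N E w j = undefined"
    using assms by (auto simp: embed_pt_def)
qed

lemma Tmap_meas[measurable]:
  assumes "i < N" "j < N"
  shows "(\<lambda>(x, a). Tmap i j a x) \<in> measurable (PiM {..<N} (\<lambda>_. lborel) \<Otimes>\<^sub>M borel) (PiM {..<N} (\<lambda>_. lborel))"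
proof (rule meas_into_PiM)
  fix k assume "k \<in> {..<N}"
  show "(\<lambda>w. (case w of (x, a) \<Rightarrow> Tmap i j a x) k) \<in> borel_measurable (Pi\<^sub>M {..<N} (\<lambda>_. lborel) \<Otimes>\<^sub>M borel)"
  proof -
    have c: "(\<lambda>w::(nat\<Rightarrow>real)\<times>real. fst w l) \<in> borel_measurable (PiM {..<N} (\<lambda>_. lborel) \<Otimes>\<^sub>M borel)" if "l < N" for l
      using that measurable_compose[OF measurable_fst measurable_component_singleton[of l "{..<N}" "\<lambda>_. lborel"]] by simp
    have s: "(\<lambda>w::(nat\<Rightarrow>real)\<times>real. snd w) \<in> borel_measurable (PiM {..<N} (\<lambda>_. lborel) \<Otimes>\<^sub>M borel)"
      by simp
    have e: "(\<lambda>w. (case w of (x, a) \<Rightarrow> Tmap i j a x) k) =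
      (if k = j then (\<lambda>w. (1 - snd w) * (fst w i + fst w j)) else if k = i then (\<lambda>w. snd w * (fst w i + fst w j)) else (\<lambda>w. fst w k))"
      by (auto simp: Tmap_def split_beta')
    show ?thesis unfolding e using c s assms \<open>k \<in> {..<N}\<close>
      by (auto intro!: borel_measurable_times borel_measurable_add borel_measurable_diff)
  qed
next
  fix w :: "(nat \<Rightarrow> real) \<times> real" and k assume "w \<in> space (Pi\<^sub>M {..<N} (\<lambda>_. lborel) \<Otimes>\<^sub>M borel)" "k \<notin> {..<N}"
  then show "(\<lambda>(x, a). Tmap i j a x) w k = undefined"
    using assms by (auto simp: Tmap_def space_pair_measure space_PiM_lborel split: prod.splits)
qed

lemma cond_dens_meas[measurable]:
  assumes "0 < N" shows "cond_dens g N E \<in> borel_measurable (PiM {..<N - 1} (\<lambda>_. lborel))"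
proof -
  have "(\<lambda>x. embed_pt N E x i) \<in> borel_measurable (PiM {..<N - 1} (\<lambda>_. lborel))" if "i < N" for i
    using that measurable_compose[OF embed_meas[OF assms] measurable_component_singleton[of i "{..<N}" "\<lambda>_. lborel"]] by simp
  then show ?thesis unfolding cond_dens_def
    by (intro borel_measurable_prod measurable_compose[OF _ gamma_dens_meas]) auto
qed

lemma cond_dens_nonneg: "0 < g \<Longrightarrow> 0 \<le> cond_dens g N E y"
  unfolding cond_dens_def by (intro prod_nonneg) (simp add: gamma_dens_nonneg)




lemma shear:
  assumes [measurable]: "(\<lambda>(u, v). W u v) \<in> borel_measurable (borel \<Otimes>\<^sub>M (borel :: real measure))"
  shows "(\<integral>\<^sup>+ v. \<integral>\<^sup>+ u. W u v \<partial>lborel \<partial>lborel) = (\<integral>\<^sup>+ s. \<integral>\<^sup>+ u. W u (s - u) \<partial>lborel \<partial>lborel)"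
proof -
  have "(\<integral>\<^sup>+ v. \<integral>\<^sup>+ u. W u v \<partial>lborel \<partial>lborel) = (\<integral>\<^sup>+ u. \<integral>\<^sup>+ v. W u v \<partial>lborel \<partial>lborel)"
    by (rule lborel_pair.Fubini') simp
  also have "\<dots> = (\<integral>\<^sup>+ u. \<integral>\<^sup>+ s. W u (s - u) \<partial>lborel \<partial>lborel)"
  proof (rule nn_integral_cong)
    fix u :: real
    have "(\<integral>\<^sup>+ v. W u v \<partial>lborel) = ennreal \<bar>1\<bar> * (\<integral>\<^sup>+ s. W u (- u + 1 * s) \<partial>lborel)"
      by (rule nn_integral_real_affine) auto
    then show "(\<integral>\<^sup>+ v. W u v \<partial>lborel) = (\<integral>\<^sup>+ s. W u (s - u) \<partial>lborel)" by simp
  qed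
  also have "\<dots> = (\<integral>\<^sup>+ s. \<integral>\<^sup>+ u. W u (s - u) \<partial>lborel \<partial>lborel)"
    by (rule lborel_pair.Fubini'[symmetric]) simp
  finally show ?thesis .
qed

lemma L2D:
  assumes g: "0 < g" and [measurable]: "\<Phi> \<in> borel_measurable borel" and Phi0: "\<And>s. 0 \<le> \<Phi> s"
    and Q[measurable]: "(\<lambda>(u, v). Q u v) \<in> borel_measurable (borel \<Otimes>\<^sub>M (borel :: real measure))"
  shows "(\<integral>\<^sup>+ v. \<integral>\<^sup>+ u. ennreal (gamma_dens g u * gamma_dens g v * \<Phi> (u + v)) * Q u v \<partial>lborel \<partial>lborel)
       = (\<integral>\<^sup>+ v. \<integral>\<^sup>+ u. ennreal (gamma_dens g u * gamma_dens g v * \<Phi> (u + v)) *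
             (\<integral>\<^sup>+ a. Q (a * (u + v)) ((1 - a) * (u + v)) \<partial>beta_meas g) \<partial>lborel \<partial>lborel)"
proof -
  interpret B: prob_space "beta_meas g" by (rule prob_space_beta[OF g])
  have m2: "(\<lambda>(u, v). \<integral>\<^sup>+ a. Q (a * (u + v)) ((1 - a) * (u + v)) \<partial>beta_meas g) \<in> borel_measurable (borel \<Otimes>\<^sub>M borel)"
  proof -
    have "(\<lambda>(w, a). Q (a * (fst w + snd w)) ((1 - a) * (fst w + snd w))) \<in> borel_measurable ((borel \<Otimes>\<^sub>M borel) \<Otimes>\<^sub>M beta_meas g)"
      using Q by (simp add: split_beta') measurable
    from B.borel_measurable_nn_integral[OF this] show ?thesis by (simp add: split_beta')
  qed
  define Z where "Z s = (\<integral>\<^sup>+ u. ennreal (gamma_dens g u * gamma_dens g (s - u)) \<partial>lborel)" for s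
  have gg: "ennreal (gamma_dens g u * gamma_dens g (s - u) * \<Phi> (u + (s - u))) =
      ennreal (\<Phi> s) * ennreal (gamma_dens g u * gamma_dens g (s - u))" for u s
    using g Phi0 by (simp add: ennreal_mult[symmetric] gamma_dens_nonneg mult.commute)
  have "(\<integral>\<^sup>+ v. \<integral>\<^sup>+ u. ennreal (gamma_dens g u * gamma_dens g v * \<Phi> (u + v)) * Q u v \<partial>lborel \<partial>lborel)
     = (\<integral>\<^sup>+ s. \<integral>\<^sup>+ u. ennreal (gamma_dens g u * gamma_dens g (s - u) * \<Phi> (u + (s - u))) * Q u (s - u) \<partial>lborel \<partial>lborel)"
    by (rule shear[where W="\<lambda>u v. ennreal (gamma_dens g u * gamma_dens g v * \<Phi> (u + v)) * Q u v"]) measurable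
  also have "\<dots> = (\<integral>\<^sup>+ s. ennreal (\<Phi> s) * (Z s * (\<integral>\<^sup>+ a. Q (a * s) ((1 - a) * s) \<partial>beta_meas g)) \<partial>lborel)"
  proof (rule nn_integral_cong)
    fix s :: real
    have Qs: "(\<lambda>u. Q u (s - u)) \<in> borel_measurable borel" by measurable
    have "(\<integral>\<^sup>+ u. ennreal (gamma_dens g u * gamma_dens g (s - u) * \<Phi> (u + (s - u))) * Q u (s - u) \<partial>lborel)
       = (\<integral>\<^sup>+ u. ennreal (\<Phi> s) * (ennreal (gamma_dens g u * gamma_dens g (s - u)) * Q u (s - u)) \<partial>lborel)"
      by (simp only: gg) (simp add: mult.assoc)
    also have "\<dots> = ennreal (\<Phi> s) * (\<integral>\<^sup>+ u. ennreal (gamma_dens g u * gamma_dens g (s - u)) * Q u (s - u) \<partial>lborel)"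
      by (rule nn_integral_cmult) measurable
    also have "\<dots> = ennreal (\<Phi> s) * (Z s * (\<integral>\<^sup>+ a. Q (a * s) (s - a * s) \<partial>beta_meas g))"
      unfolding Z_def by (subst L1[OF g Qs]) simp
    also have "\<dots> = ennreal (\<Phi> s) * (Z s * (\<integral>\<^sup>+ a. Q (a * s) ((1 - a) * s) \<partial>beta_meas g))"
      by (simp add: algebra_simps)
    finally show "(\<integral>\<^sup>+ u. ennreal (gamma_dens g u * gamma_dens g (s - u) * \<Phi> (u + (s - u))) * Q u (s - u) \<partial>lborel)
       = ennreal (\<Phi> s) * (Z s * (\<integral>\<^sup>+ a. Q (a * s) ((1 - a) * s) \<partial>beta_meas g))" .
  qed
  also have "\<dots> = (\<integral>\<^sup>+ s. \<integral>\<^sup>+ u. ennreal (gamma_dens g u * gamma_dens g (s - u) * \<Phi> (u + (s - u))) *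
             (\<integral>\<^sup>+ a. Q (a * (u + (s - u))) ((1 - a) * (u + (s - u))) \<partial>beta_meas g) \<partial>lborel \<partial>lborel)"
  proof (rule nn_integral_cong)
    fix s :: real
    have "(\<integral>\<^sup>+ u. ennreal (gamma_dens g u * gamma_dens g (s - u) * \<Phi> (u + (s - u))) *
             (\<integral>\<^sup>+ a. Q (a * (u + (s - u))) ((1 - a) * (u + (s - u))) \<partial>beta_meas g) \<partial>lborel)
       = (\<integral>\<^sup>+ u. ennreal (\<Phi> s) * (ennreal (gamma_dens g u * gamma_dens g (s - u)) *
             (\<integral>\<^sup>+ a. Q (a * s) ((1 - a) * s) \<partial>beta_meas g)) \<partial>lborel)"
      by (simp only: gg) (simp add: mult.assoc)
    also have "\<dots> = ennreal (\<Phi> s) * (\<integral>\<^sup>+ u. ennreal (gamma_dens g u * gamma_dens g (s - u)) *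
             (\<integral>\<^sup>+ a. Q (a * s) ((1 - a) * s) \<partial>beta_meas g) \<partial>lborel)"
      by (rule nn_integral_cmult) measurable
    also have "\<dots> = ennreal (\<Phi> s) * (Z s * (\<integral>\<^sup>+ a. Q (a * s) ((1 - a) * s) \<partial>beta_meas g))"
      unfolding Z_def by (subst nn_integral_multc) auto
    finally show "ennreal (\<Phi> s) * (Z s * (\<integral>\<^sup>+ a. Q (a * s) ((1 - a) * s) \<partial>beta_meas g)) =
      (\<integral>\<^sup>+ u. ennreal (gamma_dens g u * gamma_dens g (s - u) * \<Phi> (u + (s - u))) *
             (\<integral>\<^sup>+ a. Q (a * (u + (s - u))) ((1 - a) * (u + (s - u))) \<partial>beta_meas g) \<partial>lborel)" by simp
  qed
  also have "\<dots> = (\<integral>\<^sup>+ v. \<integral>\<^sup>+ u. ennreal (gamma_dens g u * gamma_dens g v * \<Phi> (u + v)) *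
             (\<integral>\<^sup>+ a. Q (a * (u + v)) ((1 - a) * (u + v)) \<partial>beta_meas g) \<partial>lborel \<partial>lborel)"
    using m2 by (intro shear[symmetric, where W="\<lambda>u v. ennreal (gamma_dens g u * gamma_dens g v * \<Phi> (u + v)) *
             (\<integral>\<^sup>+ a. Q (a * (u + v)) ((1 - a) * (u + v)) \<partial>beta_meas g)"]) measurable
  finally show ?thesis .
qed




lemma caseA:
  assumes g: "0 < g" and i: "N = Suc (Suc i)"
    and F[measurable]: "F \<in> borel_measurable (PiM {..<N} (\<lambda>_. lborel))"
  shows "(\<integral>\<^sup>+ y. ennreal (cond_dens g N E y) * F (embed_pt N E y) \<partial>PiM {..<N - 1} (\<lambda>_. lborel))
       = (\<integral>\<^sup>+ y. ennreal (cond_dens g N E y) * (\<integral>\<^sup>+ a. F (Tmap i (Suc i) a (embed_pt N E y)) \<partial>beta_meas g) \<partial>PiM {..<N - 1} (\<lambda>_. lborel))"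
proof -
  interpret B: prob_space "beta_meas g" by (rule prob_space_beta[OF g])
  have N0: "0 < N" using i by simp
  note [measurable] = embed_meas[OF N0] cond_dens_meas[OF N0]
  have TM[measurable]: "(\<lambda>(x, a). Tmap i (Suc i) a x) \<in> measurable (PiM {..<N} (\<lambda>_. lborel) \<Otimes>\<^sub>M borel) (PiM {..<N} (\<lambda>_. lborel))"
    using i by (intro Tmap_meas) auto
  have N1: "{..<N - 1} = insert i {..<i}" using i by auto
  have mR: "(\<lambda>y. ennreal (cond_dens g N E y) * (\<integral>\<^sup>+ a. F (Tmap i (Suc i) a (embed_pt N E y)) \<partial>beta_meas g))
      \<in> borel_measurable (PiM {..<N - 1} (\<lambda>_. lborel))"
  proof -
    have "(\<lambda>(y, a). F (Tmap i (Suc i) a (embed_pt N E y))) \<in> borel_measurable (PiM {..<N - 1} (\<lambda>_. lborel) \<Otimes>\<^sub>M beta_meas g)"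
    proof -
      have "(\<lambda>(y, a). (embed_pt N E y, a)) \<in> measurable (PiM {..<N - 1} (\<lambda>_. lborel) \<Otimes>\<^sub>M beta_meas g) (PiM {..<N} (\<lambda>_. lborel) \<Otimes>\<^sub>M borel)"
        by measurable
      from measurable_compose[OF measurable_compose[OF this TM] F] show ?thesis by (simp add: split_beta')
    qed
    from B.borel_measurable_nn_integral[OF this] show ?thesis by measurable
  qed
  have mL: "(\<lambda>y. ennreal (cond_dens g N E y) * F (embed_pt N E y)) \<in> borel_measurable (PiM {..<N - 1} (\<lambda>_. lborel))"
    by measurable
  show ?thesis
    unfolding N1
  proof (subst PL.product_nn_integral_insert, simp, simp, use mL N1 in simp,
         subst PL.product_nn_integral_insert, simp, simp, use mR N1 in simp, rule nn_integral_cong)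
    fix z assume z: "z \<in> space (Pi\<^sub>M {..<i} (\<lambda>_. lborel :: real measure))"
    define R where "R = real N * E - (\<Sum>k<i. z k)"
    define Pz where "Pz = (\<Prod>k<i. gamma_dens g (z k))"
    define eA where "eA u = (\<lambda>j. if j < i then z j else if j = i then u else if j = Suc i then R - u else undefined)" for u
    have Pz0: "0 \<le> Pz" unfolding Pz_def using g by (intro prod_nonneg) (simp add: gamma_dens_nonneg)
    have e1: "embed_pt N E (z(i := u)) = eA u" for u
    proof -
      have "(\<Sum>k<Suc i. (z(i := u)) k) = (\<Sum>k<i. z k) + u"
        by (simp add: sum.lessThan_Suc)
      then show ?thesis using i unfolding embed_pt_def eA_def R_def by (intro ext) auto
    qed
    have c1: "cond_dens g N E (z(i := u)) = Pz * (gamma_dens g u * gamma_dens g (R - u))" for u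
    proof -
      have "(\<Prod>j<i. gamma_dens g (eA u j)) = Pz" unfolding Pz_def eA_def by (intro prod.cong) auto
      then show ?thesis unfolding cond_dens_def e1 using i
        by (simp add: prod.lessThan_Suc eA_def mult.assoc)
    qed
    have t1: "Tmap i (Suc i) a (eA u) = eA (a * R)" for a u
      unfolding Tmap_def eA_def by (intro ext) (auto simp: algebra_simps)
    have meA[measurable]: "eA \<in> measurable borel (PiM {..<N} (\<lambda>_. lborel))"
    proof (rule meas_into_PiM)
      fix j show "(\<lambda>u. eA u j) \<in> borel_measurable borel" unfolding eA_def by measurable
    next
      fix u j assume "j \<notin> {..<N}" then show "eA u j = undefined" using i unfolding eA_def by auto
    qed
    have mG: "(\<lambda>u. F (eA u)) \<in> borel_measurable borel" by measurable
    have "(\<integral>\<^sup>+ u. ennreal (cond_dens g N E (z(i := u))) * F (embed_pt N E (z(i := u))) \<partial>lborel)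
        = (\<integral>\<^sup>+ u. ennreal Pz * (ennreal (gamma_dens g u * gamma_dens g (R - u)) * F (eA u)) \<partial>lborel)"
      using Pz0 g by (intro nn_integral_cong) (simp add: c1 e1 ennreal_mult gamma_dens_nonneg mult.assoc)
    also have "\<dots> = ennreal Pz * (\<integral>\<^sup>+ u. ennreal (gamma_dens g u * gamma_dens g (R - u)) * F (eA u) \<partial>lborel)"
      by (rule nn_integral_cmult) measurable
    also have "\<dots> = ennreal Pz * ((\<integral>\<^sup>+ u. ennreal (gamma_dens g u * gamma_dens g (R - u)) \<partial>lborel) * (\<integral>\<^sup>+ a. F (eA (a * R)) \<partial>beta_meas g))"
      by (subst L1[OF g mG]) simp
    also have "\<dots> = ennreal Pz * (\<integral>\<^sup>+ u. ennreal (gamma_dens g u * gamma_dens g (R - u)) * (\<integral>\<^sup>+ a. F (eA (a * R)) \<partial>beta_meas g) \<partial>lborel)"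
      by (subst nn_integral_multc) (simp_all)
    also have "\<dots> = (\<integral>\<^sup>+ u. ennreal Pz * (ennreal (gamma_dens g u * gamma_dens g (R - u)) * (\<integral>\<^sup>+ a. F (eA (a * R)) \<partial>beta_meas g)) \<partial>lborel)"
      by (rule nn_integral_cmult[symmetric]) measurable
    also have "\<dots> = (\<integral>\<^sup>+ u. ennreal (cond_dens g N E (z(i := u))) * (\<integral>\<^sup>+ a. F (Tmap i (Suc i) a (embed_pt N E (z(i := u)))) \<partial>beta_meas g) \<partial>lborel)"
      using Pz0 g by (intro nn_integral_cong) (simp add: c1 e1 t1 ennreal_mult gamma_dens_nonneg mult.assoc)
    finally show "(\<integral>\<^sup>+ u. ennreal (cond_dens g N E (z(i := u))) * F (embed_pt N E (z(i := u))) \<partial>lborel)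
        = (\<integral>\<^sup>+ u. ennreal (cond_dens g N E (z(i := u))) * (\<integral>\<^sup>+ a. F (Tmap i (Suc i) a (embed_pt N E (z(i := u)))) \<partial>beta_meas g) \<partial>lborel)" .
  qed
qed

lemma caseB:
  assumes g: "0 < g" and i: "Suc i < N - 1"
    and F[measurable]: "F \<in> borel_measurable (PiM {..<N} (\<lambda>_. lborel))"
  shows "(\<integral>\<^sup>+ y. ennreal (cond_dens g N E y) * F (embed_pt N E y) \<partial>PiM {..<N - 1} (\<lambda>_. lborel))
       = (\<integral>\<^sup>+ y. ennreal (cond_dens g N E y) * (\<integral>\<^sup>+ a. F (Tmap i (Suc i) a (embed_pt N E y)) \<partial>beta_meas g) \<partial>PiM {..<N - 1} (\<lambda>_. lborel))"
proof -
  interpret B: prob_space "beta_meas g" by (rule prob_space_beta[OF g])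
  define n where "n = N - 1"
  have Nn: "N = Suc n" and i': "Suc i < n" using i unfolding n_def by auto
  have N0: "0 < N" using i by simp
  note [measurable] = embed_meas[OF N0] cond_dens_meas[OF N0]
  have TM[measurable]: "(\<lambda>(x, a). Tmap i (Suc i) a x) \<in> measurable (PiM {..<N} (\<lambda>_. lborel) \<Otimes>\<^sub>M borel) (PiM {..<N} (\<lambda>_. lborel))"
    using i by (intro Tmap_meas) auto
  define J where "J = {..<n} - {i, Suc i}"
  have J: "finite J" "i \<notin> insert (Suc i) J" "Suc i \<notin> J" unfolding J_def by auto
  have N1: "{..<N - 1} = insert i (insert (Suc i) J)" using i' unfolding J_def n_def[symmetric] by auto
  have mR: "(\<lambda>y. ennreal (cond_dens g N E y) * (\<integral>\<^sup>+ a. F (Tmap i (Suc i) a (embed_pt N E y)) \<partial>beta_meas g))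
      \<in> borel_measurable (PiM {..<N - 1} (\<lambda>_. lborel))"
  proof -
    have "(\<lambda>(y, a). F (Tmap i (Suc i) a (embed_pt N E y))) \<in> borel_measurable (PiM {..<N - 1} (\<lambda>_. lborel) \<Otimes>\<^sub>M beta_meas g)"
    proof -
      have "(\<lambda>(y, a). (embed_pt N E y, a)) \<in> measurable (PiM {..<N - 1} (\<lambda>_. lborel) \<Otimes>\<^sub>M beta_meas g) (PiM {..<N} (\<lambda>_. lborel) \<Otimes>\<^sub>M borel)"
        by measurable
      from measurable_compose[OF measurable_compose[OF this TM] F] show ?thesis by (simp add: split_beta')
    qed
    from B.borel_measurable_nn_integral[OF this] show ?thesis by measurable
  qed
  have mL: "(\<lambda>y. ennreal (cond_dens g N E y) * F (embed_pt N E y)) \<in> borel_measurable (PiM {..<N - 1} (\<lambda>_. lborel))"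
    by measurable
  have step: "integral\<^sup>N (PiM (insert i (insert (Suc i) J)) (\<lambda>_. lborel)) H =
      (\<integral>\<^sup>+ z. \<integral>\<^sup>+ v. \<integral>\<^sup>+ u. H (z(Suc i := v, i := u)) \<partial>lborel \<partial>lborel \<partial>PiM J (\<lambda>_. lborel))"
    if [measurable]: "H \<in> borel_measurable (PiM (insert i (insert (Suc i) J)) (\<lambda>_. lborel))" for H :: "(nat \<Rightarrow> real) \<Rightarrow> ennreal"
  proof -
    have "integral\<^sup>N (PiM (insert i (insert (Suc i) J)) (\<lambda>_. lborel)) H =
       (\<integral>\<^sup>+ w. \<integral>\<^sup>+ u. H (w(i := u)) \<partial>lborel \<partial>PiM (insert (Suc i) J) (\<lambda>_. lborel))"
      using J that by (subst PL.product_nn_integral_insert) auto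
    also have "\<dots> = (\<integral>\<^sup>+ z. \<integral>\<^sup>+ v. \<integral>\<^sup>+ u. H (z(Suc i := v, i := u)) \<partial>lborel \<partial>lborel \<partial>PiM J (\<lambda>_. lborel))"
      using J that by (subst PL.product_nn_integral_insert) auto
    finally show ?thesis .
  qed
  show ?thesis
    unfolding N1
  proof (subst step, use mL N1 in simp, subst step, use mR N1 in simp, rule nn_integral_cong)
    fix z assume z: "z \<in> space (Pi\<^sub>M J (\<lambda>_. lborel :: real measure))"
    define R where "R = real N * E - (\<Sum>k\<in>J. z k)"
    define Pz where "Pz = (\<Prod>k\<in>J. gamma_dens g (z k))"
    define eB where "eB u v = (\<lambda>j. if j < n then (if j = i then u else if j = Suc i then v else z j)
        else if j = n then R - u - v else undefined)" for u v
    define \<Phi> where "\<Phi> s = Pz * gamma_dens g (R - s)" for s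
    have Pz0: "0 \<le> Pz" unfolding Pz_def using g by (intro prod_nonneg) (simp add: gamma_dens_nonneg)
    have Phi0: "0 \<le> \<Phi> s" for s unfolding \<Phi>_def using Pz0 g by (simp add: gamma_dens_nonneg)
    have nI: "{..<n} = insert i (insert (Suc i) J)" using N1 Nn by simp
    have e1: "embed_pt N E (z(Suc i := v, i := u)) = eB u v" for u v
    proof -
      have "(\<Sum>k<n. (z(Suc i := v, i := u)) k) = u + (v + (\<Sum>k\<in>J. (z(Suc i := v, i := u)) k))"
        unfolding nI using J by (simp add: sum.insert)
      also have "(\<Sum>k\<in>J. (z(Suc i := v, i := u)) k) = (\<Sum>k\<in>J. z k)"
        using J by (intro sum.cong) auto
      finally have "(\<Sum>k<n. (z(Suc i := v, i := u)) k) = u + (v + (\<Sum>k\<in>J. z k))" .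
      then show ?thesis using Nn i' unfolding embed_pt_def eB_def R_def by (intro ext) auto
    qed
    have c1: "cond_dens g N E (z(Suc i := v, i := u)) = gamma_dens g u * gamma_dens g v * \<Phi> (u + v)" for u v
    proof -
      have "(\<Prod>j<n. gamma_dens g (eB u v j)) = gamma_dens g u * (gamma_dens g v * (\<Prod>j\<in>J. gamma_dens g (eB u v j)))"
        unfolding nI using J i' by (simp add: prod.insert eB_def)
      also have "(\<Prod>j\<in>J. gamma_dens g (eB u v j)) = Pz"
        unfolding Pz_def eB_def J_def by (intro prod.cong) auto
      finally have "(\<Prod>j<n. gamma_dens g (eB u v j)) = gamma_dens g u * (gamma_dens g v * Pz)" .
      moreover have "cond_dens g N E (z(Suc i := v, i := u)) = (\<Prod>j<N. gamma_dens g (eB u v j))"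
        by (simp add: cond_dens_def e1)
      moreover have "eB u v n = R - (u + v)" by (simp add: eB_def)
      ultimately show ?thesis unfolding Nn
        by (simp add: prod.lessThan_Suc \<Phi>_def algebra_simps)
    qed
    have t1: "Tmap i (Suc i) a (eB u v) = eB (a * (u + v)) ((1 - a) * (u + v))" for a u v
      unfolding Tmap_def eB_def using i' by (intro ext) (auto simp: algebra_simps)
    have meB[measurable]: "(\<lambda>(u, v). eB u v) \<in> measurable (borel \<Otimes>\<^sub>M borel) (PiM {..<N} (\<lambda>_. lborel))"
    proof (rule meas_into_PiM)
      fix j show "(\<lambda>w. (case w of (u, v) \<Rightarrow> eB u v) j) \<in> borel_measurable (borel \<Otimes>\<^sub>M borel)"
        unfolding eB_def by (simp add: split_beta') measurable
    next
      fix w :: "real \<times> real" and j assume "j \<notin> {..<N}"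
      then show "(\<lambda>(u, v). eB u v) w j = undefined" using Nn unfolding eB_def by (auto simp: split_beta')
    qed
    have mQ: "(\<lambda>(u, v). F (eB u v)) \<in> borel_measurable (borel \<Otimes>\<^sub>M borel)"
      using measurable_compose[OF meB F] by (simp add: split_beta')
    have mPhi: "\<Phi> \<in> borel_measurable borel" unfolding \<Phi>_def by measurable
    have "(\<integral>\<^sup>+ v. \<integral>\<^sup>+ u. ennreal (cond_dens g N E (z(Suc i := v, i := u))) * F (embed_pt N E (z(Suc i := v, i := u))) \<partial>lborel \<partial>lborel)
        = (\<integral>\<^sup>+ v. \<integral>\<^sup>+ u. ennreal (gamma_dens g u * gamma_dens g v * \<Phi> (u + v)) * F (eB u v) \<partial>lborel \<partial>lborel)"
      by (simp add: c1 e1)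
    also have "\<dots> = (\<integral>\<^sup>+ v. \<integral>\<^sup>+ u. ennreal (gamma_dens g u * gamma_dens g v * \<Phi> (u + v)) *
             (\<integral>\<^sup>+ a. F (eB (a * (u + v)) ((1 - a) * (u + v))) \<partial>beta_meas g) \<partial>lborel \<partial>lborel)"
      by (rule L2D[OF g mPhi Phi0, where Q="\<lambda>u v. F (eB u v)"]) (use mQ in simp)
    also have "\<dots> = (\<integral>\<^sup>+ v. \<integral>\<^sup>+ u. ennreal (cond_dens g N E (z(Suc i := v, i := u))) *
         (\<integral>\<^sup>+ a. F (Tmap i (Suc i) a (embed_pt N E (z(Suc i := v, i := u)))) \<partial>beta_meas g) \<partial>lborel \<partial>lborel)"
      by (simp add: c1 e1 t1)
    finally show "(\<integral>\<^sup>+ v. \<integral>\<^sup>+ u. ennreal (cond_dens g N E (z(Suc i := v, i := u))) * F (embed_pt N E (z(Suc i := v, i := u))) \<partial>lborel \<partial>lborel)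
        = (\<integral>\<^sup>+ v. \<integral>\<^sup>+ u. ennreal (cond_dens g N E (z(Suc i := v, i := u))) *
         (\<integral>\<^sup>+ a. F (Tmap i (Suc i) a (embed_pt N E (z(Suc i := v, i := u)))) \<partial>beta_meas g) \<partial>lborel \<partial>lborel)" .
  qed
qed




lemma gibbs_Y:
  assumes g: "0 < g" and i: "Suc i < N"
    and F[measurable]: "F \<in> borel_measurable (PiM {..<N} (\<lambda>_. lborel))"
  shows "(\<integral>\<^sup>+ y. ennreal (cond_dens g N E y) * F (embed_pt N E y) \<partial>PiM {..<N - 1} (\<lambda>_. lborel))
       = (\<integral>\<^sup>+ y. ennreal (cond_dens g N E y) * (\<integral>\<^sup>+ a. F (Tmap i (Suc i) a (embed_pt N E y)) \<partial>beta_meas g) \<partial>PiM {..<N - 1} (\<lambda>_. lborel))"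
proof (cases "N = Suc (Suc i)")
  case True then show ?thesis by (rule caseA[OF g _ F])
next
  case False then have "Suc i < N - 1" using i by auto
  then show ?thesis by (rule caseB[OF g _ F])
qed

lemma Tmap_meas2[measurable]:
  assumes "i < N" "j < N" and [measurable]: "X \<in> measurable M (PiM {..<N} (\<lambda>_. lborel))" "A \<in> borel_measurable M"
  shows "(\<lambda>w. Tmap i j (A w) (X w)) \<in> measurable M (PiM {..<N} (\<lambda>_. lborel))"
  using measurable_compose[OF measurable_Pair[OF assms(3,4)] Tmap_meas[OF assms(1,2)]] by simp

lemma gibbs_nu:
  assumes g: "0 < g" and i: "Suc i < N"
    and F[measurable]: "F \<in> borel_measurable (PiM {..<N} (\<lambda>_. lborel))"
  shows "(\<integral>\<^sup>+ x. F x \<partial>nuEN g E N) = (\<integral>\<^sup>+ x. (\<integral>\<^sup>+ a. F (Tmap i (Suc i) a x) \<partial>beta_meas g) \<partial>nuEN g E N)"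
proof -
  interpret B: prob_space "beta_meas g" by (rule prob_space_beta[OF g])
  have N0: "0 < N" using i by simp
  note [measurable] = embed_meas[OF N0] cond_dens_meas[OF N0]
  have iN: "i < N" "Suc i < N" using i by auto
  have m1: "(\<lambda>(x, a). F (Tmap i (Suc i) a x)) \<in> borel_measurable (PiM {..<N} (\<lambda>_. lborel) \<Otimes>\<^sub>M beta_meas g)"
    using iN by (simp add: split_beta') measurable
  have m2[measurable]: "(\<lambda>x. \<integral>\<^sup>+ a. F (Tmap i (Suc i) a x) \<partial>beta_meas g) \<in> borel_measurable (PiM {..<N} (\<lambda>_. lborel))"
    using B.borel_measurable_nn_integral[OF m1] by simp
  define Z where "Z = (\<integral>\<^sup>+ z. ennreal (cond_dens g N E z) \<partial>PiM {..<N - 1} (\<lambda>_. lborel))"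
  have gen: "(\<integral>\<^sup>+ x. H x \<partial>nuEN g E N) = (\<integral>\<^sup>+ y. ennreal (cond_dens g N E y) * H (embed_pt N E y) \<partial>PiM {..<N - 1} (\<lambda>_. lborel)) / Z"
    if [measurable]: "H \<in> borel_measurable (PiM {..<N} (\<lambda>_. lborel))" for H
  proof -
    have "(\<integral>\<^sup>+ x. H x \<partial>nuEN g E N) = (\<integral>\<^sup>+ y. ennreal (cond_dens g N E y) / Z * H (embed_pt N E y) \<partial>PiM {..<N - 1} (\<lambda>_. lborel))"
    proof -
      have m3: "(\<lambda>y. H (embed_pt N E y)) \<in> borel_measurable (PiM {..<N - 1} (\<lambda>_. lborel))" by measurable
      have m4: "(\<lambda>y. ennreal (cond_dens g N E y) / Z) \<in> borel_measurable (PiM {..<N - 1} (\<lambda>_. lborel))" by measurable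
      have em: "embed_pt N E \<in> measurable (density (PiM {..<N - 1} (\<lambda>_. lborel)) (\<lambda>y. ennreal (cond_dens g N E y) / Z)) (PiM {..<N} (\<lambda>_. lborel))"
        by measurable
      show ?thesis unfolding nuEN_def Z_def[symmetric]
        by (subst nn_integral_distr[OF em], use that in simp, subst nn_integral_density[OF m4 m3]) simp
    qed
    also have "\<dots> = (\<integral>\<^sup>+ y. ennreal (cond_dens g N E y) * H (embed_pt N E y) / Z \<partial>PiM {..<N - 1} (\<lambda>_. lborel))"
      by (simp add: ennreal_times_divide mult.commute)
    also have "\<dots> = (\<integral>\<^sup>+ y. ennreal (cond_dens g N E y) * H (embed_pt N E y) \<partial>PiM {..<N - 1} (\<lambda>_. lborel)) / Z"
      by (rule nn_integral_divide) measurable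
    finally show ?thesis .
  qed
  show ?thesis
    by (simp only: gen[OF F] gen[OF m2] gibbs_Y[OF g i F])
qed

lemma AE_pos:
  assumes g: "0 < g" and N0: "0 < N"
  shows "AE x in nuEN g E N. \<forall>j<N. 0 < x j"
proof -
  note [measurable] = embed_meas[OF N0] cond_dens_meas[OF N0]
  have c: "(\<lambda>w::nat\<Rightarrow>real. w k) \<in> borel_measurable (Pi\<^sub>M {..<N} (\<lambda>_. lborel))" if "k < N" for k
    using that measurable_component_singleton[of k "{..<N}" "\<lambda>_. lborel"] by simp
  have S: "{x \<in> space (PiM {..<N} (\<lambda>_. lborel :: real measure)). \<forall>j<N. 0 < x j} \<in> sets (PiM {..<N} (\<lambda>_. lborel))"
  proof -
    have "{x \<in> space (PiM {..<N} (\<lambda>_. lborel :: real measure)). \<forall>j<N. 0 < x j} = (\<Inter>j<N. {x \<in> space (PiM {..<N} (\<lambda>_. lborel :: real measure)). 0 < x j}) \<inter> space (PiM {..<N} (\<lambda>_. lborel :: real measure))"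
      by auto
    also have "\<dots> \<in> sets (PiM {..<N} (\<lambda>_. lborel))"
    proof -
      have each: "{x \<in> space (PiM {..<N} (\<lambda>_. lborel :: real measure)). 0 < x j} \<in> sets (PiM {..<N} (\<lambda>_. lborel))"
        if "j < N" for j
        using measurable_sets[OF c[OF that], of "{0<..}"] by (simp add: vimage_def Int_def conj_commute)
      show ?thesis using N0 by (intro sets.Int sets.top sets.finite_INT) (auto intro: each)
    qed
    finally show ?thesis .
  qed
  define Z where "Z = (\<integral>\<^sup>+ z. ennreal (cond_dens g N E z) \<partial>PiM {..<N - 1} (\<lambda>_. lborel))"
  have em: "embed_pt N E \<in> measurable (density (PiM {..<N - 1} (\<lambda>_. lborel)) (\<lambda>y. ennreal (cond_dens g N E y) / Z)) (PiM {..<N} (\<lambda>_. lborel))"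
    by measurable
  have m4: "(\<lambda>y. ennreal (cond_dens g N E y) / Z) \<in> borel_measurable (PiM {..<N - 1} (\<lambda>_. lborel))" by measurable
  show ?thesis unfolding nuEN_def Z_def[symmetric]
  proof (subst AE_distr_iff[OF em S], subst AE_density[OF m4], rule AE_I2, intro impI allI)
    fix y j assume pos: "0 < ennreal (cond_dens g N E y) / Z"
      and j: "j < N"
    have "cond_dens g N E y \<noteq> 0"
    proof
      assume "cond_dens g N E y = 0" then show False using pos by simp
    qed
    then have "gamma_dens g (embed_pt N E y j) \<noteq> 0" using j unfolding cond_dens_def by auto
    then show "0 < embed_pt N E y j" by (auto simp: gamma_dens_def split: if_splits)
  qed
qed




lemma nu_gen:
  assumes N0: "0 < N" and [measurable]: "H \<in> borel_measurable (PiM {..<N} (\<lambda>_. lborel))"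
  shows "(\<integral>\<^sup>+ x. H x \<partial>nuEN g E N) = (\<integral>\<^sup>+ y. ennreal (cond_dens g N E y) * H (embed_pt N E y) \<partial>PiM {..<N - 1} (\<lambda>_. lborel))
     / (\<integral>\<^sup>+ z. ennreal (cond_dens g N E z) \<partial>PiM {..<N - 1} (\<lambda>_. lborel))"
proof -
  note [measurable] = embed_meas[OF N0] cond_dens_meas[OF N0]
  define Z where "Z = (\<integral>\<^sup>+ z. ennreal (cond_dens g N E z) \<partial>PiM {..<N - 1} (\<lambda>_. lborel))"
  have m3: "(\<lambda>y. H (embed_pt N E y)) \<in> borel_measurable (PiM {..<N - 1} (\<lambda>_. lborel))" by measurable
  have m4: "(\<lambda>y. ennreal (cond_dens g N E y) / Z) \<in> borel_measurable (PiM {..<N - 1} (\<lambda>_. lborel))" by measurable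
  have em: "embed_pt N E \<in> measurable (density (PiM {..<N - 1} (\<lambda>_. lborel)) (\<lambda>y. ennreal (cond_dens g N E y) / Z)) (PiM {..<N} (\<lambda>_. lborel))"
    by measurable
  have "(\<integral>\<^sup>+ x. H x \<partial>nuEN g E N) = (\<integral>\<^sup>+ y. ennreal (cond_dens g N E y) / Z * H (embed_pt N E y) \<partial>PiM {..<N - 1} (\<lambda>_. lborel))"
    unfolding nuEN_def Z_def[symmetric]
    by (subst nn_integral_distr[OF em], simp, subst nn_integral_density[OF m4 m3]) simp
  also have "\<dots> = (\<integral>\<^sup>+ y. ennreal (cond_dens g N E y) * H (embed_pt N E y) / Z \<partial>PiM {..<N - 1} (\<lambda>_. lborel))"
    by (simp add: ennreal_times_divide mult.commute)
  also have "\<dots> = (\<integral>\<^sup>+ y. ennreal (cond_dens g N E y) * H (embed_pt N E y) \<partial>PiM {..<N - 1} (\<lambda>_. lborel)) / Z"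
    by (rule nn_integral_divide) measurable
  finally show ?thesis unfolding Z_def .
qed

definition e2 :: "real \<Rightarrow> real \<Rightarrow> nat \<Rightarrow> real" where
  "e2 t a = (\<lambda>j. if j = 0 then a * t else if j = 1 then (1 - a) * t else undefined)"

lemma e2_meas[measurable]: "e2 t \<in> measurable borel (PiM {..<2} (\<lambda>_. lborel))"
  by (rule meas_into_PiM) (auto simp: e2_def)

lemma single_int:
  assumes [measurable]: "H \<in> borel_measurable (PiM {..<1::nat} (\<lambda>_. lborel :: real measure))"
  shows "(\<integral>\<^sup>+ y. H y \<partial>PiM {..<1::nat} (\<lambda>_. lborel)) = (\<integral>\<^sup>+ u. H (\<lambda>j. if j = 0 then u else undefined) \<partial>lborel)"
proof -
  have u: "{..<1::nat} = {0}" by auto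
  have mj: "(\<lambda>u::real. (\<lambda>j::nat. if j = 0 then u else undefined)) \<in> measurable borel (PiM {..<1::nat} (\<lambda>_. lborel))"
    by (rule meas_into_PiM) auto
  have "(\<integral>\<^sup>+ y. H y \<partial>PiM {..<1::nat} (\<lambda>_. lborel)) = (\<integral>\<^sup>+ y. H (\<lambda>j. if j = 0 then y 0 else undefined) \<partial>PiM {0::nat} (\<lambda>_. lborel))"
    unfolding u
  proof (rule nn_integral_cong)
    fix y assume "y \<in> space (PiM {0::nat} (\<lambda>_. lborel :: real measure))"
    then have "y = (\<lambda>j. if j = 0 then y 0 else undefined)" by (auto simp: space_PiM_lborel)
    then show "H y = H (\<lambda>j. if j = 0 then y 0 else undefined)" by simp
  qed
  also have "\<dots> = (\<integral>\<^sup>+ u. H (\<lambda>j. if j = 0 then u else undefined) \<partial>lborel)"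
  proof -
    have "(\<lambda>u. H (\<lambda>j. if j = 0 then u else undefined)) \<in> borel_measurable borel"
      using measurable_compose[OF mj assms] by simp
    then show ?thesis
      by (subst PL.product_nn_integral_singleton[where f="\<lambda>u. H (\<lambda>j. if j = 0 then u else undefined)"]) auto
  qed
  finally show ?thesis .
qed

lemma nu2_nn:
  assumes g: "0 < g" and t: "0 < t" and [measurable]: "F \<in> borel_measurable (PiM {..<2} (\<lambda>_. lborel))"
  shows "(\<integral>\<^sup>+ x. F x \<partial>nuEN g (t / 2) 2) = (\<integral>\<^sup>+ a. F (e2 t a) \<partial>beta_meas g)"
proof -
  define e2' where "e2' u = (\<lambda>j::nat. if j = 0 then u else if j = 1 then t - u else undefined)" for u
  have emb: "embed_pt 2 (t / 2) (\<lambda>j. if j = 0 then u else undefined) = e2' u" for u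
    unfolding embed_pt_def e2'_def by (intro ext) auto
  have cd: "cond_dens g 2 (t / 2) (\<lambda>j. if j = 0 then u else undefined) = gamma_dens g u * gamma_dens g (t - u)" for u
    unfolding cond_dens_def emb by (simp add: e2'_def numeral_2_eq_2 prod.lessThan_Suc)
  have me2'[measurable]: "e2' \<in> measurable borel (PiM {..<2} (\<lambda>_. lborel))"
    by (rule meas_into_PiM) (auto simp: e2'_def)
  have N0: "0 < (2::nat)" by simp
  note [measurable] = embed_meas[OF N0, of "t/2"] cond_dens_meas[OF N0, of g "t/2"]
  have gen1: "(\<integral>\<^sup>+ y. ennreal (cond_dens g 2 (t/2) y) * H (embed_pt 2 (t/2) y) \<partial>PiM {..<2 - 1} (\<lambda>_. lborel))
      = (\<integral>\<^sup>+ u. ennreal (gamma_dens g u * gamma_dens g (t - u)) * H (e2' u) \<partial>lborel)"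
    if [measurable]: "H \<in> borel_measurable (PiM {..<2} (\<lambda>_. lborel))" for H
  proof -
    have "(\<lambda>y. ennreal (cond_dens g 2 (t/2) y) * H (embed_pt 2 (t/2) y)) \<in> borel_measurable (PiM {..<2 - 1} (\<lambda>_. lborel))"
      by measurable
    moreover have e: "{..<(2::nat) - 1} = {..<1}" by simp
    ultimately have m1: "(\<lambda>y. ennreal (cond_dens g 2 (t/2) y) * H (embed_pt 2 (t/2) y)) \<in> borel_measurable (PiM {..<1} (\<lambda>_. lborel))"
      by simp
    show ?thesis unfolding e single_int[OF m1] emb cd by simp
  qed
  define Zg where "Zg = (\<integral>\<^sup>+ u. ennreal (gamma_dens g u * gamma_dens g (t - u)) \<partial>lborel)"
  have Zg: "Zg \<noteq> 0" "Zg \<noteq> \<top>" unfolding Zg_def using Z2_val[OF g t] Kc_pos[OF g t] Beta_pos[OF g] t by auto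
  have mF: "(\<lambda>u. F (e2' u)) \<in> borel_measurable borel" by measurable
  have "(\<integral>\<^sup>+ x. F x \<partial>nuEN g (t / 2) 2) = (Zg * (\<integral>\<^sup>+ a. F (e2' (a * t)) \<partial>beta_meas g)) / Zg"
    using nu_gen[of 2 F g "t / 2"] gen1[of F] gen1[of "\<lambda>_. 1"] L1[OF g mF, of t]
    by (simp add: Zg_def)
  also have "\<dots> = (\<integral>\<^sup>+ a. F (e2' (a * t)) \<partial>beta_meas g)"
    using Zg by (subst mult.commute) (rule ennreal_mult_divide_eq)
  also have "\<dots> = (\<integral>\<^sup>+ a. F (e2 t a) \<partial>beta_meas g)"
  proof -
    have "e2' (a * t) = e2 t a" for a unfolding e2'_def e2_def by (intro ext) (auto simp: algebra_simps)
    then show ?thesis by simp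
  qed
  finally show ?thesis .
qed

lemma nu2_rep:
  assumes g: "0 < g" and t: "0 < t"
  shows "nuEN g (t / 2) 2 = distr (beta_meas g) (PiM {..<2} (\<lambda>_. lborel)) (e2 t)"
proof (rule measure_eqI)
  show "sets (nuEN g (t / 2) 2) = sets (distr (beta_meas g) (PiM {..<2} (\<lambda>_. lborel)) (e2 t))"
    by (simp add: nuEN_def)
next
  fix A assume A: "A \<in> sets (nuEN g (t / 2) 2)"
  then have A': "A \<in> sets (PiM {..<2} (\<lambda>_. lborel))" by (simp add: nuEN_def)
  have "emeasure (nuEN g (t / 2) 2) A = (\<integral>\<^sup>+ x. indicator A x \<partial>nuEN g (t / 2) 2)"
    using A by simp
  also have "\<dots> = (\<integral>\<^sup>+ a. indicator A (e2 t a) \<partial>beta_meas g)"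
    using A' by (intro nu2_nn[OF g t]) simp
  also have "\<dots> = (\<integral>\<^sup>+ a. indicator (e2 t -` A \<inter> space (beta_meas g)) a \<partial>beta_meas g)"
    by (intro nn_integral_cong) (auto split: split_indicator)
  also have "\<dots> = emeasure (beta_meas g) (e2 t -` A \<inter> space (beta_meas g))"
    using measurable_sets[OF e2_meas A', of t] by (intro nn_integral_indicator) simp
  also have "\<dots> = emeasure (distr (beta_meas g) (PiM {..<2} (\<lambda>_. lborel)) (e2 t)) A"
    using A' by (subst emeasure_distr) auto
  finally show "emeasure (nuEN g (t / 2) 2) A = emeasure (distr (beta_meas g) (PiM {..<2} (\<lambda>_. lborel)) (e2 t)) A" .
qed




definition hcut :: "real \<Rightarrow> nat \<Rightarrow> real \<Rightarrow> real" where
  "hcut c n x = max 0 (min 1 (1 - real n * (x - c)))"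

lemma hcut_cont: "continuous_on A (hcut c n)"
  unfolding hcut_def by (intro continuous_intros)

lemma hcut_lim: "(\<lambda>n. hcut c n x) \<longlonglongrightarrow> indicator {..c} x"
proof (cases "x \<le> c")
  case True
  then have "hcut c n x = 1" for n
    by (simp add: hcut_def mult_nonneg_nonpos)
  with True show ?thesis by simp
next
  case False
  then have xc: "0 < x - c" by simp
  obtain n0 :: nat where n0: "1 / (x - c) \<le> real n0" using real_arch_simple by blast
  have "eventually (\<lambda>n. hcut c n x = 0) sequentially"
    unfolding eventually_sequentially
  proof (intro exI allI impI)
    fix n assume "n0 \<le> n"
    then have "1 / (x - c) \<le> real n" using n0 by linarith
    then have "1 \<le> real n * (x - c)" using xc by (simp add: field_simps)
    then show "hcut c n x = 0" by (simp add: hcut_def)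
  qed
  then have "(\<lambda>n. hcut c n x) \<longlonglongrightarrow> 0" by (rule tendsto_eventually)
  with False show ?thesis by simp
qed

lemma hcut_bound: "\<bar>hcut c n x\<bar> \<le> 1"
  by (simp add: hcut_def)

lemma hcut_meas[measurable]: "hcut c n \<in> borel_measurable borel"
  unfolding hcut_def by measurable

definition Pk :: "(real \<Rightarrow> real \<Rightarrow> real measure) \<Rightarrow> real \<times> real \<Rightarrow> real measure" where
  "Pk P p = (if 0 < fst p \<and> 0 < snd p then P (fst p) (snd p) else return borel 0)"

lemma Q_sets[measurable]: "{p::real \<times> real. 0 < fst p \<and> 0 < snd p} \<in> sets borel"
  by (rule borel_open) (intro open_Collect_conj open_Collect_less continuous_intros)

lemma Pk_meas:
  assumes em: "exchange_model Lam P"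
  shows "Pk P \<in> measurable borel (subprob_algebra borel)"
proof -
  define Q where "Q = {p::real \<times> real. 0 < fst p \<and> 0 < snd p}"
  have QS: "Q \<in> sets borel" unfolding Q_def by simp
  have prob: "prob_space (P a b)" and sP: "sets (P a b) = sets borel" if "0 < a" "0 < b" for a b
    using em that unfolding exchange_model_def by auto
  have cont: "continuous_on Q (\<lambda>p. \<integral>x. h x \<partial>P (fst p) (snd p))" if "continuous_on {0..1} h" for h :: "real \<Rightarrow> real"
  proof -
    from em have "\<forall>h::real\<Rightarrow>real. continuous_on {0..1} h \<longrightarrow> continuous_on {p. 0 < fst p \<and> 0 < snd p} (\<lambda>p. \<integral>x. h x \<partial>P (fst p) (snd p))"
      unfolding exchange_model_def by (elim conjE) assumption
    then show ?thesis using that unfolding Q_def by blast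
  qed
  have Pk_prob: "prob_space (Pk P p)" for p
    by (auto simp: Pk_def intro: prob prob_space_return)
  have Pk_sets: "sets (Pk P p) = sets borel" for p
    by (auto simp: Pk_def sP)
  have key: "(\<lambda>p. emeasure (Pk P p) {..c}) \<in> borel_measurable borel" for c :: real
  proof -
    define u where "u p = indicator Q p * measure (P (fst p) (snd p)) {..c}" for p
    have um: "u \<in> borel_measurable borel"
    proof (rule borel_measurable_LIMSEQ_real)
      fix n
      show "(\<lambda>p. indicator Q p * (\<integral>x. hcut c n x \<partial>P (fst p) (snd p))) \<in> borel_measurable borel"
        using borel_measurable_continuous_on_indicator[OF QS cont[OF hcut_cont]] by simp
    next
      fix p :: "real \<times> real"
      show "(\<lambda>n. indicator Q p * (\<integral>x. hcut c n x \<partial>P (fst p) (snd p))) \<longlonglongrightarrow> u p"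
      proof (cases "p \<in> Q")
        case False then show ?thesis by (simp add: u_def)
      next
        case True
        then have pq: "0 < fst p" "0 < snd p" unfolding Q_def by auto
        interpret PP: prob_space "P (fst p) (snd p)" using prob[OF pq] .
        have ms[measurable_cong]: "sets (P (fst p) (snd p)) = sets borel" using sP[OF pq] .
        have "(\<lambda>n. \<integral>x. hcut c n x \<partial>P (fst p) (snd p)) \<longlonglongrightarrow> (\<integral>x. indicator {..c} x \<partial>P (fst p) (snd p))"
          by (rule integral_dominated_convergence[where w="\<lambda>_. 1"]) (auto intro: hcut_lim hcut_bound)
        moreover have "(\<integral>x. indicator {..c} x \<partial>P (fst p) (snd p)) = measure (P (fst p) (snd p)) {..c}"
          using sets_eq_imp_space_eq[OF ms] by simp
        ultimately show ?thesis using True by (simp add: u_def)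
      qed
    qed
    have "emeasure (Pk P p) {..c} = ennreal (u p + indicator (- Q) p * indicator {..c} (0::real))" for p
    proof (cases "p \<in> Q")
      case True
      then have pq: "0 < fst p" "0 < snd p" unfolding Q_def by auto
      interpret PP: prob_space "P (fst p) (snd p)" using prob[OF pq] .
      have "{..c} \<in> sets (P (fst p) (snd p))" using sP[OF pq] by simp
      then show ?thesis using True pq by (simp add: Pk_def u_def PP.emeasure_eq_measure)
    next
      case False
      then show ?thesis by (auto simp: Pk_def u_def Q_def split: split_indicator)
    qed
    then have "(\<lambda>p. emeasure (Pk P p) {..c}) = (\<lambda>p. ennreal (u p + indicator (- Q) p * indicator {..c} (0::real)))"
      by auto
    also have "\<dots> \<in> borel_measurable borel"
      using um QS by measurable
    finally show ?thesis .
  qed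
  show ?thesis
  proof (rule measurable_subprob_algebra_generated[where \<Omega>=UNIV and G="range (\<lambda>c. {..c::real})"])
    show "sets borel = sigma_sets UNIV (range (\<lambda>c. {..c::real}))"
      by (subst borel_eq_atMost) (simp add: sets_measure_of)
    show "Int_stable (range (\<lambda>c. {..c::real}))"
      unfolding Int_stable_def by (auto simp: Int_atMost)
    show "range (\<lambda>c. {..c::real}) \<subseteq> Pow UNIV" by simp
    show "subprob_space (Pk P a)" for a using Pk_prob by (rule prob_space_imp_subprob_space)
    show "sets (Pk P a) = sets borel" for a by (rule Pk_sets)
    show "(\<lambda>a. emeasure (Pk P a) A) \<in> borel_measurable borel" if "A \<in> range (\<lambda>c. {..c::real})" for A
      using that key by auto
    have "emeasure (Pk P a) UNIV = 1" for a
    proof -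
      interpret PP: prob_space "Pk P a" by (rule Pk_prob)
      have "space (Pk P a) = UNIV" using sets_eq_imp_space_eq[OF Pk_sets] by simp
      then show ?thesis using PP.emeasure_space_1 by simp
    qed
    then show "(\<lambda>a. emeasure (Pk P a) UNIV) \<in> borel_measurable borel" by simp
  qed
qed

lemma Lam_meas:
  assumes em: "exchange_model Lam P"
  shows "(\<lambda>p. indicator {p::real \<times> real. 0 < fst p \<and> 0 < snd p} p * Lam (fst p) (snd p)) \<in> borel_measurable borel"
  using borel_measurable_continuous_on_indicator[OF Q_sets, of "\<lambda>p. Lam (fst p) (snd p)"] em
  unfolding exchange_model_def by simp

lemma kernel_meas:
  assumes em: "exchange_model Lam P"
    and [measurable]: "f1 \<in> borel_measurable M" "f2 \<in> borel_measurable M"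
    and G[measurable]: "(\<lambda>(x, b). G x b) \<in> borel_measurable (M \<Otimes>\<^sub>M borel)"
  shows "(\<lambda>x. if 0 < f1 x \<and> 0 < f2 x then ennreal (Lam (f1 x) (f2 x)) * (\<integral>\<^sup>+ b. G x b \<partial>P (f1 x) (f2 x)) else 0)
     \<in> borel_measurable M"
proof -
  have K: "(\<lambda>x. Pk P (f1 x, f2 x)) \<in> measurable M (subprob_algebra borel)"
    using measurable_compose[OF _ Pk_meas[OF em], of "\<lambda>x. (f1 x, f2 x)" M] by simp
  have I[measurable]: "(\<lambda>x. \<integral>\<^sup>+ b. G x b \<partial>Pk P (f1 x, f2 x)) \<in> borel_measurable M"
    by (rule nn_integral_measurable_subprob_algebra2[OF G K])
  have L[measurable]: "(\<lambda>x. indicator {p::real \<times> real. 0 < fst p \<and> 0 < snd p} (f1 x, f2 x) * Lam (f1 x) (f2 x)) \<in> borel_measurable M"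
    using measurable_compose[OF _ Lam_meas[OF em], of "\<lambda>x. (f1 x, f2 x)" M] by simp
  have "(\<lambda>x. if 0 < f1 x \<and> 0 < f2 x then ennreal (Lam (f1 x) (f2 x)) * (\<integral>\<^sup>+ b. G x b \<partial>P (f1 x) (f2 x)) else 0)
    = (\<lambda>x. if 0 < f1 x \<and> 0 < f2 x then ennreal (indicator {p::real \<times> real. 0 < fst p \<and> 0 < snd p} (f1 x, f2 x) * Lam (f1 x) (f2 x)) * (\<integral>\<^sup>+ b. G x b \<partial>Pk P (f1 x, f2 x)) else 0)"
    by (auto simp: Pk_def)
  also have "\<dots> \<in> borel_measurable M" by measurable
  finally show ?thesis .
qed




definition Bfun where
  "Bfun Lam P f i y = ennreal (Lam (y i) (y (Suc i))) *
     (\<integral>\<^sup>+ b. ennreal ((f (Tmap i (Suc i) b y) - f y)\<^sup>2) \<partial>P (y i) (y (Suc i)))"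

definition Bpos where
  "Bpos Lam P f i y = (if 0 < y i \<and> 0 < y (Suc i) then Bfun Lam P f i y else 0)"

definition Afun where
  "Afun g m f i y = ennreal ((y i + y (Suc i)) powr m * (Dij g i (Suc i) f y)\<^sup>2)"

definition Umap :: "(nat \<Rightarrow> real) \<Rightarrow> nat \<Rightarrow> (nat \<Rightarrow> real) \<Rightarrow> (nat \<Rightarrow> real)" where
  "Umap x i y = x(i := y 0, Suc i := y 1)"

lemma Umap_meas:
  assumes "x \<in> space (PiM {..<N} (\<lambda>_. lborel))" "Suc i < N"
  shows "Umap x i \<in> measurable (PiM {..<2} (\<lambda>_. lborel)) (PiM {..<N} (\<lambda>_. lborel))"
proof (rule meas_into_PiM)
  have c: "(\<lambda>w::nat\<Rightarrow>real. w k) \<in> borel_measurable (Pi\<^sub>M {..<2} (\<lambda>_. lborel))" if "k < 2" for k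
    using that measurable_component_singleton[of k "{..<2}" "\<lambda>_. lborel"] by simp
  fix j show "(\<lambda>w. Umap x i w j) \<in> borel_measurable (Pi\<^sub>M {..<2} (\<lambda>_. lborel))"
    unfolding Umap_def using c[of 0] c[of 1] by (cases "j = Suc i"; cases "j = i") auto
next
  fix w j assume "j \<notin> {..<N}"
  then show "Umap x i w j = undefined" using assms by (auto simp: Umap_def space_PiM_lborel)
qed

lemma Tmap_Umap: "Tmap i (Suc i) b (Umap x i y) = Umap x i (Tmap 0 1 b y)"
  unfolding Tmap_def Umap_def by (intro ext) auto

lemma Umap_e2: "Umap x i (e2 (x i + x (Suc i)) a) = Tmap i (Suc i) a x"
  unfolding Tmap_def Umap_def e2_def by (intro ext) auto

lemma Bfun_Umap: "Bfun Lam P (\<lambda>y. f (Umap x i y)) 0 y = Bfun Lam P f i (Umap x i y)"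
  unfolding Bfun_def by (simp add: Tmap_Umap) (simp add: Umap_def)

lemma Bpos_Umap: "Bpos Lam P (\<lambda>y. f (Umap x i y)) 0 y = Bpos Lam P f i (Umap x i y)"
  unfolding Bpos_def Bfun_Umap by (simp add: Umap_def)

lemma TT: "Tmap i (Suc i) b (Tmap i (Suc i) a x) = Tmap i (Suc i) b x"
  unfolding Tmap_def by (intro ext) (auto simp: algebra_simps)

lemma Tsum: "Tmap i (Suc i) a x i + Tmap i (Suc i) a x (Suc i) = x i + x (Suc i)"
  unfolding Tmap_def by (simp add: algebra_simps)




lemma pw:
  fixes f :: "(nat \<Rightarrow> real) \<Rightarrow> real"
  assumes g: "0 < g" and em: "exchange_model Lam P"
    and hyp: "\<forall>E>0. ennreal (C * E powr m) \<le> spectral_gap g Lam P E 2"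
    and C: "0 \<le> C" and iN: "Suc i < N"
    and f[measurable]: "f \<in> borel_measurable (PiM {..<N} (\<lambda>_. lborel))"
    and x: "x \<in> space (PiM {..<N} (\<lambda>_. lborel))" and xi: "0 < x i" "0 < x (Suc i)"
    and fin: "(\<integral>\<^sup>+ a. ennreal ((f (Tmap i (Suc i) a x))\<^sup>2) \<partial>beta_meas g) \<noteq> \<infinity>"
  shows "ennreal (C / 2 powr m) * (\<integral>\<^sup>+ a. Afun g m f i (Tmap i (Suc i) a x) \<partial>beta_meas g)
     \<le> (\<integral>\<^sup>+ a. Bpos Lam P f i (Tmap i (Suc i) a x) \<partial>beta_meas g) / 2"
proof -
  interpret B: prob_space "beta_meas g" by (rule prob_space_beta[OF g])
  define t where "t = x i + x (Suc i)"
  have t: "0 < t" using xi by (simp add: t_def)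
  define \<phi> where "\<phi> a = f (Tmap i (Suc i) a x)" for a
  have Tm[measurable]: "(\<lambda>a. Tmap i (Suc i) a x) \<in> measurable borel (PiM {..<N} (\<lambda>_. lborel))"
    using iN x by (intro Tmap_meas2) auto
  have mphi[measurable]: "\<phi> \<in> borel_measurable borel" unfolding \<phi>_def by measurable
  have int2: "integrable (beta_meas g) (\<lambda>a. (\<phi> a)\<^sup>2)"
  proof (rule integrableI_bounded)
    show "(\<lambda>a. (\<phi> a)\<^sup>2) \<in> borel_measurable (beta_meas g)" by simp
    show "(\<integral>\<^sup>+ a. ennreal (norm ((\<phi> a)\<^sup>2)) \<partial>beta_meas g) < \<infinity>"
      using fin by (simp add: \<phi>_def less_top)
  qed
  have int1: "integrable (beta_meas g) \<phi>"
    by (rule B.square_integrable_imp_integrable[OF _ int2]) simp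
  define c0 where "c0 = (\<integral>a. \<phi> a \<partial>beta_meas g)"
  have Eij_c0: "Eij g i (Suc i) f (Tmap i (Suc i) a x) = c0" for a
    unfolding Eij_def TT c0_def \<phi>_def ..
  have sqe: "(\<lambda>a. (\<phi> a - c0)\<^sup>2) = (\<lambda>a. (\<phi> a)\<^sup>2 - 2 * c0 * \<phi> a + c0\<^sup>2)"
    by (simp add: power2_diff algebra_simps)
  have intV: "integrable (beta_meas g) (\<lambda>a. (\<phi> a - c0)\<^sup>2)"
    unfolding sqe using int1 int2 by (auto intro!: integrable_add integrable_diff integrable_mult_right)
  define V where "V = (\<integral>a. (\<phi> a - c0)\<^sup>2 \<partial>beta_meas g)"
  have V0: "0 \<le> V" unfolding V_def by simp
  have LHS: "(\<integral>\<^sup>+ a. Afun g m f i (Tmap i (Suc i) a x) \<partial>beta_meas g) = ennreal (t powr m) * ennreal V"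
  proof -
    have "(\<integral>\<^sup>+ a. Afun g m f i (Tmap i (Suc i) a x) \<partial>beta_meas g)
        = (\<integral>\<^sup>+ a. ennreal (t powr m) * ennreal ((\<phi> a - c0)\<^sup>2) \<partial>beta_meas g)"
      by (intro nn_integral_cong)
        (simp add: Afun_def Tsum Dij_def Eij_c0 t_def[symmetric] \<phi>_def[symmetric] ennreal_mult power2_commute)
    also have "\<dots> = ennreal (t powr m) * (\<integral>\<^sup>+ a. ennreal ((\<phi> a - c0)\<^sup>2) \<partial>beta_meas g)"
      by (rule nn_integral_cmult) simp
    also have "(\<integral>\<^sup>+ a. ennreal ((\<phi> a - c0)\<^sup>2) \<partial>beta_meas g) = ennreal V"
      unfolding V_def by (rule nn_integral_eq_integral[OF intV]) simp
    finally show ?thesis .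
  qed
  have cst: "ennreal (C / 2 powr m) * ennreal (t powr m) = ennreal (C * (t / 2) powr m)"
    using C t by (simp add: ennreal_mult[symmetric] powr_divide)
  show ?thesis
  proof (cases "V = 0")
    case True
    then show ?thesis unfolding LHS by simp
  next
    case False
    then have Vp: "0 < V" using V0 by simp
    define h where "h y = f (Umap x i y)" for y
    define h0 where "h0 y = h y - c0" for y
    note Um[measurable] = Umap_meas[OF x iN]
    have mh[measurable]: "h \<in> borel_measurable (PiM {..<2} (\<lambda>_. lborel))" unfolding h_def by measurable
    have mh0[measurable]: "h0 \<in> borel_measurable (PiM {..<2} (\<lambda>_. lborel))" unfolding h0_def by measurable
    have nu2: "nuEN g (t / 2) 2 = distr (beta_meas g) (PiM {..<2} (\<lambda>_. lborel)) (e2 t)"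
      by (rule nu2_rep[OF g t])
    have he2: "h (e2 t a) = \<phi> a" for a by (simp add: h_def \<phi>_def t_def Umap_e2)
    have sqint: "(\<integral>y. (h0 y)\<^sup>2 \<partial>nuEN g (t / 2) 2) = V"
      unfolding nu2 V_def by (subst integral_distr) (auto simp: h0_def he2)
    have L2: "L2_meanzero (nuEN g (t / 2) 2) h0"
      unfolding L2_meanzero_def
    proof (intro conjI)
      show "h0 \<in> borel_measurable (nuEN g (t / 2) 2)" unfolding nu2 by simp
      show "integrable (nuEN g (t / 2) 2) (\<lambda>y. (h0 y)\<^sup>2)"
        unfolding nu2 by (subst integrable_distr_eq) (auto simp: h0_def he2 intV)
      show "(\<integral>y. h0 y \<partial>nuEN g (t / 2) 2) = 0"
        unfolding nu2 using int1 B.prob_space by (subst integral_distr) (auto simp: h0_def he2 c0_def)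
      show "(\<integral>y. (h0 y)\<^sup>2 \<partial>nuEN g (t / 2) 2) \<noteq> 0" using sqint False by simp
    qed
    have sg: "spectral_gap g Lam P (t / 2) 2 \<le> dirichlet_form g Lam P (t / 2) 2 h0 / ennreal V"
      unfolding spectral_gap_def using L2 sqint by (intro INF_lower2[of h0]) auto
    have mBp: "Bpos Lam P h 0 \<in> borel_measurable (PiM {..<2} (\<lambda>_. lborel))"
    proof -
      have c: "(\<lambda>w::nat\<Rightarrow>real. w k) \<in> borel_measurable (Pi\<^sub>M {..<2} (\<lambda>_. lborel))" if "k < 2" for k
        using that measurable_component_singleton[of k "{..<2}" "\<lambda>_. lborel"] by simp
      have T2[measurable]: "(\<lambda>(y, b). Tmap 0 (Suc 0) b y) \<in> measurable (PiM {..<2} (\<lambda>_. lborel) \<Otimes>\<^sub>M borel) (PiM {..<2} (\<lambda>_. lborel))"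
        by (rule Tmap_meas) auto
      have G: "(\<lambda>(y, b). ennreal ((h (Tmap 0 (Suc 0) b y) - h y)\<^sup>2)) \<in> borel_measurable (PiM {..<2} (\<lambda>_. lborel) \<Otimes>\<^sub>M borel)"
        using measurable_compose[OF T2 mh] by (simp add: split_beta') measurable
      show ?thesis
      proof -
        have e: "Bpos Lam P h 0 = (\<lambda>x. if 0 < x 0 \<and> 0 < x (Suc 0) then ennreal (Lam (x 0) (x (Suc 0))) *
            (\<integral>\<^sup>+ b. ennreal ((h (Tmap 0 (Suc 0) b x) - h x)\<^sup>2) \<partial>P (x 0) (x (Suc 0))) else 0)"
          by (simp add: Bpos_def Bfun_def fun_eq_iff)
        show ?thesis unfolding e using c[of 0] c[of "Suc 0"] G
          by (intro kernel_meas[OF em]) auto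
      qed
    qed
    have DF: "dirichlet_form g Lam P (t / 2) 2 h0 = (\<integral>\<^sup>+ a. Bpos Lam P f i (Tmap i (Suc i) a x) \<partial>beta_meas g) / 2"
    proof -
      have "dirichlet_form g Lam P (t / 2) 2 h0 = (\<integral>\<^sup>+ y. Bfun Lam P h 0 y \<partial>nuEN g (t / 2) 2) / 2"
        unfolding dirichlet_form_def Bfun_def by (simp add: h0_def)
      also have "(\<integral>\<^sup>+ y. Bfun Lam P h 0 y \<partial>nuEN g (t / 2) 2) = (\<integral>\<^sup>+ y. Bpos Lam P h 0 y \<partial>nuEN g (t / 2) 2)"
        using AE_pos[OF g, of 2 "t / 2"] by (intro nn_integral_cong_AE) (auto simp: Bpos_def)
      also have "\<dots> = (\<integral>\<^sup>+ a. Bpos Lam P h 0 (e2 t a) \<partial>beta_meas g)"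
        unfolding nu2 using mBp by (subst nn_integral_distr) auto
      also have "\<dots> = (\<integral>\<^sup>+ a. Bpos Lam P f i (Tmap i (Suc i) a x) \<partial>beta_meas g)"
        unfolding h_def Bpos_Umap by (simp add: t_def Umap_e2)
      finally show ?thesis .
    qed
    have "ennreal (C / 2 powr m) * (\<integral>\<^sup>+ a. Afun g m f i (Tmap i (Suc i) a x) \<partial>beta_meas g)
        = ennreal (C * (t / 2) powr m) * ennreal V"
      unfolding LHS cst[symmetric] by (simp add: mult.assoc)
    also have "\<dots> \<le> spectral_gap g Lam P (t / 2) 2 * ennreal V"
      using hyp t by (intro mult_right_mono) auto
    also have "\<dots> \<le> dirichlet_form g Lam P (t / 2) 2 h0 / ennreal V * ennreal V"
      using sg by (intro mult_right_mono) auto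
    also have "\<dots> = dirichlet_form g Lam P (t / 2) 2 h0"
      using Vp by (simp add: ennreal_divide_times)
    finally show ?thesis unfolding DF .
  qed
qed




lemma bond:
  fixes f :: "(nat \<Rightarrow> real) \<Rightarrow> real"
  assumes g: "0 < g" and em: "exchange_model Lam P"
    and hyp: "\<forall>E>0. ennreal (C * E powr m) \<le> spectral_gap g Lam P E 2"
    and C: "0 \<le> C" and iN: "Suc i < N"
    and L2: "L2_meanzero (nuEN g E N) f"
  shows "ennreal (C / 2 powr m) * (\<integral>\<^sup>+ x. Afun g m f i x \<partial>nuEN g E N) \<le> (\<integral>\<^sup>+ x. Bfun Lam P f i x \<partial>nuEN g E N) / 2"
proof -
  interpret B: prob_space "beta_meas g" by (rule prob_space_beta[OF g])
  have N0: "0 < N" using iN by simp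
  have sN: "sets (nuEN g E N) = sets (PiM {..<N} (\<lambda>_. lborel))" by (simp add: nuEN_def)
  have spN: "space (nuEN g E N) = space (PiM {..<N} (\<lambda>_. lborel))" by (simp add: nuEN_def)
  have fm[measurable]: "f \<in> borel_measurable (PiM {..<N} (\<lambda>_. lborel))"
    using L2 by (simp add: L2_meanzero_def nuEN_def)
  have TM[measurable]: "(\<lambda>(x, a). Tmap i (Suc i) a x) \<in> measurable (PiM {..<N} (\<lambda>_. lborel) \<Otimes>\<^sub>M borel) (PiM {..<N} (\<lambda>_. lborel))"
    using iN by (intro Tmap_meas) auto
  have c: "(\<lambda>w::nat\<Rightarrow>real. w k) \<in> borel_measurable (Pi\<^sub>M {..<N} (\<lambda>_. lborel))" if "k < N" for k
    using that measurable_component_singleton[of k "{..<N}" "\<lambda>_. lborel"] by simp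
  have ci[measurable]: "(\<lambda>w::nat\<Rightarrow>real. w i) \<in> borel_measurable (Pi\<^sub>M {..<N} (\<lambda>_. lborel))"
    and cs[measurable]: "(\<lambda>w::nat\<Rightarrow>real. w (Suc i)) \<in> borel_measurable (Pi\<^sub>M {..<N} (\<lambda>_. lborel))"
    using c iN by auto
  have fT: "(\<lambda>(x, a). f (Tmap i (Suc i) a x)) \<in> borel_measurable (PiM {..<N} (\<lambda>_. lborel) \<Otimes>\<^sub>M beta_meas g)"
    using measurable_compose[OF TM fm] by (simp add: split_beta')
  have mE: "(\<lambda>x. Eij g i (Suc i) f x) \<in> borel_measurable (PiM {..<N} (\<lambda>_. lborel))"
    unfolding Eij_def using B.borel_measurable_lebesgue_integral[OF fT] by simp
  have mA[measurable]: "Afun g m f i \<in> borel_measurable (PiM {..<N} (\<lambda>_. lborel))"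
    unfolding Afun_def[abs_def] Dij_def using mE by measurable
  have mB[measurable]: "Bpos Lam P f i \<in> borel_measurable (PiM {..<N} (\<lambda>_. lborel))"
  proof -
    have G: "(\<lambda>(y, b). ennreal ((f (Tmap i (Suc i) b y) - f y)\<^sup>2)) \<in> borel_measurable (PiM {..<N} (\<lambda>_. lborel) \<Otimes>\<^sub>M borel)"
      using measurable_compose[OF TM fm] by (simp add: split_beta') measurable
    have e: "Bpos Lam P f i = (\<lambda>x. if 0 < x i \<and> 0 < x (Suc i) then ennreal (Lam (x i) (x (Suc i))) *
        (\<integral>\<^sup>+ b. ennreal ((f (Tmap i (Suc i) b x) - f x)\<^sup>2) \<partial>P (x i) (x (Suc i))) else 0)"
      by (simp add: Bpos_def Bfun_def fun_eq_iff)
    show ?thesis unfolding e using G by (intro kernel_meas[OF em ci cs])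
  qed
  have mIA: "(\<lambda>x. \<integral>\<^sup>+ a. Afun g m f i (Tmap i (Suc i) a x) \<partial>beta_meas g) \<in> borel_measurable (PiM {..<N} (\<lambda>_. lborel))"
    using B.borel_measurable_nn_integral[of "\<lambda>x a. Afun g m f i (Tmap i (Suc i) a x)"] measurable_compose[OF TM mA]
    by (simp add: split_beta')
  have mIB: "(\<lambda>x. \<integral>\<^sup>+ a. Bpos Lam P f i (Tmap i (Suc i) a x) \<partial>beta_meas g) \<in> borel_measurable (PiM {..<N} (\<lambda>_. lborel))"
    using B.borel_measurable_nn_integral[of "\<lambda>x a. Bpos Lam P f i (Tmap i (Suc i) a x)"] measurable_compose[OF TM mB]
    by (simp add: split_beta')
  have mF2: "(\<lambda>x. ennreal ((f x)\<^sup>2)) \<in> borel_measurable (PiM {..<N} (\<lambda>_. lborel))" by measurable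
  have mIF: "(\<lambda>x. \<integral>\<^sup>+ a. ennreal ((f (Tmap i (Suc i) a x))\<^sup>2) \<partial>beta_meas g) \<in> borel_measurable (PiM {..<N} (\<lambda>_. lborel))"
    using B.borel_measurable_nn_integral[of "\<lambda>x a. ennreal ((f (Tmap i (Suc i) a x))\<^sup>2)"] measurable_compose[OF TM mF2]
    by (simp add: split_beta')
  have finAE: "AE x in nuEN g E N. (\<integral>\<^sup>+ a. ennreal ((f (Tmap i (Suc i) a x))\<^sup>2) \<partial>beta_meas g) \<noteq> \<infinity>"
  proof (rule nn_integral_PInf_AE)
    show "(\<lambda>x. \<integral>\<^sup>+ a. ennreal ((f (Tmap i (Suc i) a x))\<^sup>2) \<partial>beta_meas g) \<in> borel_measurable (nuEN g E N)"
      using mIF by (simp add: nuEN_def)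
    have "(\<integral>\<^sup>+ x. (\<integral>\<^sup>+ a. ennreal ((f (Tmap i (Suc i) a x))\<^sup>2) \<partial>beta_meas g) \<partial>nuEN g E N)
        = (\<integral>\<^sup>+ x. ennreal ((f x)\<^sup>2) \<partial>nuEN g E N)"
      by (rule gibbs_nu[OF g iN mF2, symmetric])
    also have "\<dots> = ennreal (\<integral>x. (f x)\<^sup>2 \<partial>nuEN g E N)"
      using L2 by (intro nn_integral_eq_integral) (auto simp: L2_meanzero_def)
    finally show "(\<integral>\<^sup>+ x. (\<integral>\<^sup>+ a. ennreal ((f (Tmap i (Suc i) a x))\<^sup>2) \<partial>beta_meas g) \<partial>nuEN g E N) \<noteq> \<infinity>"
      by simp
  qed
  have "ennreal (C / 2 powr m) * (\<integral>\<^sup>+ x. Afun g m f i x \<partial>nuEN g E N)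
      = ennreal (C / 2 powr m) * (\<integral>\<^sup>+ x. (\<integral>\<^sup>+ a. Afun g m f i (Tmap i (Suc i) a x) \<partial>beta_meas g) \<partial>nuEN g E N)"
    by (simp only: gibbs_nu[OF g iN mA])
  also have "\<dots> = (\<integral>\<^sup>+ x. ennreal (C / 2 powr m) * (\<integral>\<^sup>+ a. Afun g m f i (Tmap i (Suc i) a x) \<partial>beta_meas g) \<partial>nuEN g E N)"
    using mIA by (intro nn_integral_cmult[symmetric]) (simp add: nuEN_def)
  also have "\<dots> \<le> (\<integral>\<^sup>+ x. (\<integral>\<^sup>+ a. Bpos Lam P f i (Tmap i (Suc i) a x) \<partial>beta_meas g) / 2 \<partial>nuEN g E N)"
  proof (rule nn_integral_mono_AE)
    show "AE x in nuEN g E N. ennreal (C / 2 powr m) * (\<integral>\<^sup>+ a. Afun g m f i (Tmap i (Suc i) a x) \<partial>beta_meas g)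
        \<le> (\<integral>\<^sup>+ a. Bpos Lam P f i (Tmap i (Suc i) a x) \<partial>beta_meas g) / 2"
      using AE_pos[OF g N0, of E] finAE AE_space[of "nuEN g E N"]
    proof (eventually_elim)
      case (elim x)
      then have x: "x \<in> space (PiM {..<N} (\<lambda>_. lborel))" using spN by simp
      show ?case using elim iN
        by (intro pw[OF g em hyp C iN fm x]) auto
    qed
  qed
  also have "\<dots> = (\<integral>\<^sup>+ x. (\<integral>\<^sup>+ a. Bpos Lam P f i (Tmap i (Suc i) a x) \<partial>beta_meas g) \<partial>nuEN g E N) / 2"
    using mIB by (intro nn_integral_divide) (simp add: nuEN_def)
  also have "\<dots> = (\<integral>\<^sup>+ x. Bpos Lam P f i x \<partial>nuEN g E N) / 2"
    by (simp only: gibbs_nu[OF g iN mB])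
  also have "\<dots> = (\<integral>\<^sup>+ x. Bfun Lam P f i x \<partial>nuEN g E N) / 2"
    using AE_pos[OF g N0, of E] iN by (intro arg_cong2[where f="(/)"] nn_integral_cong_AE) (auto simp: Bpos_def)
  finally show ?thesis .
qed




theorem proposition2:
  fixes g C m :: real and Lam :: "real \<Rightarrow> real \<Rightarrow> real" and P :: "real \<Rightarrow> real \<Rightarrow> real measure"
  assumes "0 < g"
    and "exchange_model Lam P"
    and "reversible_model g Lam P"
    and "0 < C" and "0 \<le> m"
    and "\<forall>E>0. ennreal (C * E powr m) \<le> spectral_gap g Lam P E 2"
  shows "\<forall>E>0. \<forall>N\<ge>2. ennreal (C / 2 powr m) * lambda_star g m E N \<le> spectral_gap g Lam P E N"
proof (intro allI impI)
  fix E :: real and N :: nat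
  assume E: "0 < E" and N: "2 \<le> N"
  have g: "0 < g" and em: "exchange_model Lam P" and C: "0 \<le> C"
    and hyp: "\<forall>E>0. ennreal (C * E powr m) \<le> spectral_gap g Lam P E 2"
    using assms by auto
  let ?c = "ennreal (C / 2 powr m)"
  have key: "?c * Dstar g m E N f \<le> dirichlet_form g Lam P E N f"
    if L2: "L2_meanzero (nuEN g E N) f" for f
  proof -
    have "?c * Dstar g m E N f = (\<Sum>i<N - 1. ?c * (\<integral>\<^sup>+ x. Afun g m f i x \<partial>nuEN g E N))"
      unfolding Dstar_def Afun_def[abs_def] by (simp add: sum_distrib_left)
    also have "\<dots> \<le> (\<Sum>i<N - 1. (\<integral>\<^sup>+ x. Bfun Lam P f i x \<partial>nuEN g E N) / 2)"
    proof (rule sum_mono)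
      fix i assume "i \<in> {..<N - 1}"
      then have "Suc i < N" by auto
      then show "?c * (\<integral>\<^sup>+ x. Afun g m f i x \<partial>nuEN g E N) \<le> (\<integral>\<^sup>+ x. Bfun Lam P f i x \<partial>nuEN g E N) / 2"
        by (rule bond[OF g em hyp C _ L2])
    qed
    also have "\<dots> = (\<Sum>i<N - 1. (\<integral>\<^sup>+ x. Bfun Lam P f i x \<partial>nuEN g E N)) / 2"
      by (simp add: divide_ennreal_def sum_distrib_right)
    also have "\<dots> = dirichlet_form g Lam P E N f"
      unfolding dirichlet_form_def Bfun_def[abs_def] by simp
    finally show ?thesis .
  qed
  show "?c * lambda_star g m E N \<le> spectral_gap g Lam P E N"
    unfolding spectral_gap_def
  proof (rule INF_greatest)
    fix f assume f: "f \<in> {f. L2_meanzero (nuEN g E N) f}"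
    have "?c * lambda_star g m E N \<le> ?c * (Dstar g m E N f / ennreal (\<integral>x. (f x)\<^sup>2 \<partial>nuEN g E N))"
      unfolding lambda_star_def using f by (intro mult_left_mono INF_lower) auto
    also have "\<dots> = ?c * Dstar g m E N f / ennreal (\<integral>x. (f x)\<^sup>2 \<partial>nuEN g E N)"
      by (simp add: ennreal_times_divide)
    also have "\<dots> \<le> dirichlet_form g Lam P E N f / ennreal (\<integral>x. (f x)\<^sup>2 \<partial>nuEN g E N)"
      using f key by (intro divide_right_mono_ennreal) auto
    finally show "?c * lambda_star g m E N \<le> dirichlet_form g Lam P E N f / ennreal (\<integral>x. (f x)\<^sup>2 \<partial>nuEN g E N)" .
  qed
qed


end
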